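(* In every optimal schedule for $\mathcal I^{FE}$ (minimizing total flow plus energy), each of the jobs $n+1,\dots,2n+1$ has average speed $s_1=1$ (i.e., processing time equal to its volume).
   Context: Model: jobs with release times and volumes (unit weights) on a processor with allowed speeds $0<s_1<s_2$ and powers $0<P_1<P_2$; a schedule assigns at each time at most one released unfinished job and a speed (preemption allowed), feasible if each job receives its full volume; flow $F=\sum_j(C_j-r_j)$ with $C_j$ the completion time, energy $E=\int P_{S(t)}dt$. Construction: Let $\mathcal I^B$ be a B-IDUA instance (minimize total flow subject to energy $\le B$) with two speeds $s_1=1<s_2$, powers $P_1<P_2$, budget $B$, and jobs $1,\dots,n$ with volumes $v_j$, release times $r_j$ ($\min r_j=0$). Let $V=\sum_{j=1}^nv_j$ and assume $P_1V<B<P_2V/s_2$. Let $\Delta_1=\frac{P_2s_1-P_1s_2}{s_2-s_1}$ and $Y=(B-P_1V)/\Delta_1$. Let $\sigma_1$ be the SRPT (shortest remaining processing time) schedule of $\mathcal I^B$ processing every job at speed $s_1$, $C_{\max}(\sigma_1)$ its makespan and $I(\sigma_1)=C_{\max}(\sigma_1)-V$. The FE-IDUA instance $\mathcal I^{FE}$ has $2n+1$ unit-weight jobs: jobs $1,\dots,n$ identical to those of $\mathcal I^B$; job $n+1$ with volume $I(\sigma_1)+(s_2+1)V+Y$ and release time $0$; jobs $n+2,\dots,2n+1$ with volume $Y+1$ and release time $C_{\max}(\sigma_1)+(s_2+1)V$. Its speeds are $s_1,s_2$ with powers $\tilde P_1=P_1$ and $\tilde P_2=(n+\tfrac32)(s_2-1)+P_1s_2$.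 *)

theory Defs
  imports "HOL-Analysis.Analysis"
begin

text \<open>A schedule on a single processor is a pair (J, S): J t is the job processed at
time t (None = idle), S t is the speed used at time t (relevant only when J t is not None).\<close>

definition work :: "(real \<Rightarrow> nat option) \<Rightarrow> (real \<Rightarrow> real) \<Rightarrow> nat \<Rightarrow> real \<Rightarrow> real" where
  "work J S j t = (LINT u:{0..t}|lborel. (if J u = Some j then S u else 0))"

definition remaining :: "(nat \<Rightarrow> real) \<Rightarrow> (real \<Rightarrow> nat option) \<Rightarrow> (real \<Rightarrow> real) \<Rightarrow> nat \<Rightarrow> real \<Rightarrow> real" where
  "remaining v J S j t = v j - work J S j t"

definition compl :: "(nat \<Rightarrow> real) \<Rightarrow> (real \<Rightarrow> nat option) \<Rightarrow> (real \<Rightarrow> real) \<Rightarrow> nat \<Rightarrow> real" where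
  "compl v J S j = Inf {t. v j \<le> work J S j t}"

definition feasible :: "nat \<Rightarrow> (nat \<Rightarrow> real) \<Rightarrow> (nat \<Rightarrow> real) \<Rightarrow> real \<Rightarrow> real
    \<Rightarrow> (real \<Rightarrow> nat option) \<Rightarrow> (real \<Rightarrow> real) \<Rightarrow> bool" where
  "feasible m v r s1 s2 J S \<longleftrightarrow>
     J \<in> measurable lborel (count_space UNIV) \<and> S \<in> borel_measurable lborel \<and>
     (\<forall>t j. J t = Some j \<longrightarrow>
        j \<in> {1..m} \<and> r j \<le> t \<and> work J S j t < v j \<and> (S t = s1 \<or> S t = s2)) \<and>
     (\<forall>j\<in>{1..m}. \<exists>t. v j \<le> work J S j t)"

definition power :: "real \<Rightarrow> real \<Rightarrow> real \<Rightarrow> (real \<Rightarrow> nat option) \<Rightarrow> (real \<Rightarrow> real) \<Rightarrow> real \<Rightarrow> real" where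
  "power s1 P1 P2 J S t = (if J t = None then 0 else if S t = s1 then P1 else P2)"

definition energy :: "real \<Rightarrow> real \<Rightarrow> real \<Rightarrow> (real \<Rightarrow> nat option) \<Rightarrow> (real \<Rightarrow> real) \<Rightarrow> real" where
  "energy s1 P1 P2 J S = (LINT t:{0..}|lborel. power s1 P1 P2 J S t)"

definition flow :: "nat \<Rightarrow> (nat \<Rightarrow> real) \<Rightarrow> (nat \<Rightarrow> real) \<Rightarrow> (real \<Rightarrow> nat option) \<Rightarrow> (real \<Rightarrow> real) \<Rightarrow> real" where
  "flow m v r J S = (\<Sum>j\<in>{1..m}. compl v J S j - r j)"

definition optimal_FE :: "nat \<Rightarrow> (nat \<Rightarrow> real) \<Rightarrow> (nat \<Rightarrow> real) \<Rightarrow> real \<Rightarrow> real \<Rightarrow> real \<Rightarrow> real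
    \<Rightarrow> (real \<Rightarrow> nat option) \<Rightarrow> (real \<Rightarrow> real) \<Rightarrow> bool" where
  "optimal_FE m v r s1 s2 P1 P2 J S \<longleftrightarrow>
     feasible m v r s1 s2 J S \<and>
     (\<forall>J' S'. feasible m v r s1 s2 J' S' \<longrightarrow>
        flow m v r J S + energy s1 P1 P2 J S \<le> flow m v r J' S' + energy s1 P1 P2 J' S')"

definition proc_time :: "(real \<Rightarrow> nat option) \<Rightarrow> nat \<Rightarrow> real" where
  "proc_time J j = measure lborel {t. J t = Some j}"

definition avg_speed :: "(nat \<Rightarrow> real) \<Rightarrow> (real \<Rightarrow> nat option) \<Rightarrow> nat \<Rightarrow> real" where
  "avg_speed v J j = v j / proc_time J j"

definition is_SRPT :: "nat \<Rightarrow> (nat \<Rightarrow> real) \<Rightarrow> (nat \<Rightarrow> real) \<Rightarrow> real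
    \<Rightarrow> (real \<Rightarrow> nat option) \<Rightarrow> (real \<Rightarrow> real) \<Rightarrow> bool" where
  "is_SRPT n v r s1 J S \<longleftrightarrow>
     feasible n v r s1 s1 J S \<and>
     (\<forall>t j. j \<in> {1..n} \<and> r j \<le> t \<and> work J S j t < v j \<longrightarrow>
        (\<exists>i. J t = Some i \<and> remaining v J S i t \<le> remaining v J S j t))"

definition makespan :: "nat \<Rightarrow> (nat \<Rightarrow> real) \<Rightarrow> (real \<Rightarrow> nat option) \<Rightarrow> (real \<Rightarrow> real) \<Rightarrow> real" where
  "makespan n v J S = Max (compl v J S ` {1..n})"

text \<open>The FE-IDUA instance built from the B-IDUA instance (s1 = 1); Cm = C_max(sigma_1).\<close>
definition Yval :: "nat \<Rightarrow> (nat \<Rightarrow> real) \<Rightarrow> real \<Rightarrow> real \<Rightarrow> real \<Rightarrow> real \<Rightarrow> real" where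
  "Yval n v s2 P1 P2 B =
     (let V = (\<Sum>j\<in>{1..n}. v j); \<Delta>1 = (P2 * 1 - P1 * s2) / (s2 - 1) in (B - P1 * V) / \<Delta>1)"

definition FE_vol :: "nat \<Rightarrow> (nat \<Rightarrow> real) \<Rightarrow> real \<Rightarrow> real \<Rightarrow> real \<Rightarrow> real \<Rightarrow> real \<Rightarrow> nat \<Rightarrow> real" where
  "FE_vol n v s2 P1 P2 B Cm j =
     (let V = (\<Sum>i\<in>{1..n}. v i); Y = Yval n v s2 P1 P2 B in
      if j \<le> n then v j
      else if j = n + 1 then (Cm - V) + (s2 + 1) * V + Y
      else Y + 1)"

definition FE_rel :: "nat \<Rightarrow> (nat \<Rightarrow> real) \<Rightarrow> (nat \<Rightarrow> real) \<Rightarrow> real \<Rightarrow> real \<Rightarrow> nat \<Rightarrow> real" where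
  "FE_rel n v r s2 Cm j =
     (let V = (\<Sum>i\<in>{1..n}. v i) in
      if j \<le> n then r j
      else if j = n + 1 then 0
      else Cm + (s2 + 1) * V)"

definition FE_P2 :: "nat \<Rightarrow> real \<Rightarrow> real \<Rightarrow> real" where
  "FE_P2 n s2 P1 = (real n + 3/2) * (s2 - 1) + P1 * s2"

end

theory Submission
  imports Defs
begin


definition cm :: "real set \<Rightarrow> real \<Rightarrow> real" where
  "cm X t = measure lborel (X \<inter> {0..t})"

lemma Icc_fm: "{a..b::real} \<in> fmeasurable lborel"
  using fmeasurable_cbox[of a b] by (simp only: cbox_interval)

lemma fmI: "X \<in> sets lborel \<Longrightarrow> X \<subseteq> {a..b::real} \<Longrightarrow> X \<in> fmeasurable lborel"
  using fmeasurableI2[OF Icc_fm[of a b]] by blast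

lemma fm_Int_Icc: "X \<in> sets lborel \<Longrightarrow> X \<inter> {a..b::real} \<in> fmeasurable lborel"
  by (rule fmI[of _ a b]) auto

lemma meas_Un_fm: "A \<in> fmeasurable lborel \<Longrightarrow> B \<in> fmeasurable lborel \<Longrightarrow> A \<inter> B = {} \<Longrightarrow>
  measure lborel (A \<union> B) = measure lborel A + measure lborel B"
  by (rule measure_Union) (auto simp: fmeasurableD2 fmeasurableD)

lemma meas_Diff_fm: "A \<in> fmeasurable lborel \<Longrightarrow> B \<in> sets lborel \<Longrightarrow> B \<subseteq> A \<Longrightarrow>
  measure lborel (A - B) = measure lborel A - measure lborel B"
  by (rule measure_Diff) (auto simp: fmeasurableD2 fmeasurableD)

lemma meas_single: "measure lborel {p::real} = 0"
  by (simp add: measure_def)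

lemma cm_nonneg: "0 \<le> cm X t" by (simp add: cm_def)

lemma cm_neg: "t < 0 \<Longrightarrow> cm X t = 0"
  by (simp add: cm_def)

lemma cm_zero: "X \<in> sets lborel \<Longrightarrow> cm X 0 = 0"
proof -
  assume X: "X \<in> sets lborel"
  have f0: "{0::real} \<in> fmeasurable lborel" using Icc_fm[of 0 0] by simp
  have "measure lborel (X \<inter> {0..0}) \<le> measure lborel {0::real}"
    by (rule measure_mono_fmeasurable) (use fmeasurableD[OF fm_Int_Icc[OF X, of 0 0]] f0 in auto)
  then show ?thesis using cm_nonneg[of X 0] meas_single[of 0] unfolding cm_def by linarith
qed

lemma cm_le0: "X \<in> sets lborel \<Longrightarrow> t \<le> 0 \<Longrightarrow> cm X t = 0"
  using cm_zero cm_neg by (cases "t = 0") auto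

lemma cm_split:
  assumes X: "X \<in> sets lborel" and "0 \<le> s" "s \<le> t"
  shows "cm X t = cm X s + measure lborel (X \<inter> {s<..t})"
proof -
  have e: "X \<inter> {0..t} = (X \<inter> {0..s}) \<union> (X \<inter> {s<..t})" using assms by auto
  have f1: "X \<inter> {0..s} \<in> fmeasurable lborel" using X by (rule fm_Int_Icc)
  have f2: "X \<inter> {s<..t} \<in> fmeasurable lborel" by (rule fmI[of _ s t]) (use X in auto)
  have "measure lborel ((X \<inter> {0..s}) \<union> (X \<inter> {s<..t})) = measure lborel (X \<inter> {0..s}) + measure lborel (X \<inter> {s<..t})"
    by (rule meas_Un_fm) (use f1 f2 in auto)
  then show ?thesis using e by (simp add: cm_def)
qed

lemma meas_Ioc_le: "X \<in> sets lborel \<Longrightarrow> s \<le> t \<Longrightarrow> measure lborel (X \<inter> {s<..t}) \<le> t - s"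
proof -
  assume X: "X \<in> sets lborel" and st: "s \<le> t"
  have "measure lborel (X \<inter> {s<..t}) \<le> measure lborel {s..t}"
    by (rule measure_mono_fmeasurable) (use X Icc_fm in auto)
  then show ?thesis using st by simp
qed

lemma cm_mono: "X \<in> sets lborel \<Longrightarrow> s \<le> t \<Longrightarrow> cm X s \<le> cm X t"
proof -
  assume X: "X \<in> sets lborel" and st: "s \<le> t"
  show ?thesis
  proof (cases "0 \<le> s")
    case True then show ?thesis using cm_split[OF X True st] by simp
  next
    case False then show ?thesis using cm_neg[of s X] cm_nonneg[of X t] by simp
  qed
qed

lemma cm_lip: "X \<in> sets lborel \<Longrightarrow> s \<le> t \<Longrightarrow> cm X t - cm X s \<le> t - s"
proof -
  assume X: "X \<in> sets lborel" and st: "s \<le> t"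
  show ?thesis
  proof (cases "0 \<le> s")
    case True then show ?thesis using cm_split[OF X True st] meas_Ioc_le[OF X st] by simp
  next
    case False
    show ?thesis
    proof (cases "0 \<le> t")
      case True
      have "cm X t = cm X 0 + measure lborel (X \<inter> {0<..t})" using cm_split[OF X _ True] by simp
      then show ?thesis using cm_zero[OF X] meas_Ioc_le[OF X True] cm_neg[of s X] False by simp
    next
      case False then show ?thesis using cm_neg[of t X] cm_nonneg[of X s] st by simp
    qed
  qed
qed

lemma cm_abs: "X \<in> sets lborel \<Longrightarrow> \<bar>cm X t - cm X s\<bar> \<le> \<bar>t - s\<bar>"
  using cm_lip[of X s t] cm_lip[of X t s] cm_mono[of X s t] cm_mono[of X t s]
  by (cases "s \<le> t") auto

lemma cm_cont: "X \<in> sets lborel \<Longrightarrow> continuous_on A (cm X)"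
proof -
  assume X: "X \<in> sets lborel"
  have "1-lipschitz_on A (cm X)"
    by (rule lipschitz_onI) (use cm_abs[OF X] in \<open>auto simp: dist_real_def\<close>)
  then show ?thesis by (rule lipschitz_on_continuous_on)
qed

lemma cm_Un: "X \<in> sets lborel \<Longrightarrow> Y \<in> sets lborel \<Longrightarrow> X \<inter> Y = {} \<Longrightarrow> cm (X \<union> Y) t = cm X t + cm Y t"
proof -
  assume X: "X \<in> sets lborel" and Y: "Y \<in> sets lborel" and d: "X \<inter> Y = {}"
  have "measure lborel ((X \<inter> {0..t}) \<union> (Y \<inter> {0..t})) = measure lborel (X \<inter> {0..t}) + measure lborel (Y \<inter> {0..t})"
    by (rule meas_Un_fm) (use fm_Int_Icc[OF X] fm_Int_Icc[OF Y] fmeasurableD[OF fm_Int_Icc[OF Y]] d in auto)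
  moreover have "(X \<union> Y) \<inter> {0..t} = (X \<inter> {0..t}) \<union> (Y \<inter> {0..t})" by auto
  ultimately show ?thesis by (simp add: cm_def)
qed

lemma cm_Diff: "X \<in> sets lborel \<Longrightarrow> Y \<in> sets lborel \<Longrightarrow> Y \<subseteq> X \<Longrightarrow> cm (X - Y) t = cm X t - cm Y t"
proof -
  assume X: "X \<in> sets lborel" and Y: "Y \<in> sets lborel" and d: "Y \<subseteq> X"
  have "measure lborel ((X \<inter> {0..t}) - (Y \<inter> {0..t})) = measure lborel (X \<inter> {0..t}) - measure lborel (Y \<inter> {0..t})"
    by (rule meas_Diff_fm) (use fm_Int_Icc[OF X] fm_Int_Icc[OF Y] fmeasurableD[OF fm_Int_Icc[OF Y]] d in auto)
  moreover have "(X - Y) \<inter> {0..t} = (X \<inter> {0..t}) - (Y \<inter> {0..t})" by auto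
  ultimately show ?thesis by (simp add: cm_def)
qed

lemma cm_subset: "X \<in> sets lborel \<Longrightarrow> Y \<in> sets lborel \<Longrightarrow> X \<subseteq> Y \<Longrightarrow> cm X t \<le> cm Y t"
  unfolding cm_def by (rule measure_mono_fmeasurable) (auto simp: fm_Int_Icc)

lemma meas_Ico_eq: "X \<in> sets lborel \<Longrightarrow> measure lborel (X \<inter> {0..<p}) = cm X p"
proof -
  assume X: "X \<in> sets lborel"
  have f1: "X \<inter> {0..<p} \<in> fmeasurable lborel" by (rule fmI[of _ 0 p]) (use X in auto)
  have a: "measure lborel (X \<inter> {0..<p}) \<le> cm X p" unfolding cm_def
    by (rule measure_mono_fmeasurable) (use fm_Int_Icc[OF X] f1 in auto)
  have f2: "{p} \<in> fmeasurable lborel" using Icc_fm[of p p] by simp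
  have f3: "(X \<inter> {0..<p}) \<union> {p} \<in> fmeasurable lborel" using f1 f2 by (rule fmeasurable.Un)
  have "cm X p \<le> measure lborel ((X \<inter> {0..<p}) \<union> {p})" unfolding cm_def
    by (rule measure_mono_fmeasurable) (use f3 fmeasurableD[OF fm_Int_Icc[OF X]] in auto)
  also have "\<dots> \<le> measure lborel (X \<inter> {0..<p}) + measure lborel {p}"
    by (rule measure_subadditive) (use f1 f2 in \<open>auto simp: fmeasurableD2\<close>)
  finally show ?thesis using a meas_single[of p] by simp
qed

lemma cm_lt: "X \<in> sets lborel \<Longrightarrow> cm (X \<inter> {..<p}) t = cm X (min p t)"
proof -
  assume X: "X \<in> sets lborel"
  show ?thesis
  proof (cases "t < p")
    case True
    then have "X \<inter> {..<p} \<inter> {0..t} = X \<inter> {0..t}" by auto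
    then show ?thesis using True by (simp add: cm_def)
  next
    case False
    then have "X \<inter> {..<p} \<inter> {0..t} = X \<inter> {0..<p}" by auto
    then show ?thesis using False meas_Ico_eq[OF X, of p] by (simp add: cm_def min_def)
  qed
qed

lemma cm_ge: "X \<in> sets lborel \<Longrightarrow> 0 \<le> p \<Longrightarrow> cm (X \<inter> {p..}) t = cm X (max p t) - cm X p"
proof -
  assume X: "X \<in> sets lborel" and p: "0 \<le> p"
  show ?thesis
  proof (cases "t < p")
    case True
    then have "X \<inter> {p..} \<inter> {0..t} = {}" by auto
    then show ?thesis using True by (simp add: cm_def max_def)
  next
    case False
    have e: "X \<inter> {0..t} = (X \<inter> {0..<p}) \<union> (X \<inter> {p..} \<inter> {0..t})" using False p by auto
    have f1: "X \<inter> {0..<p} \<in> fmeasurable lborel" by (rule fmI[of _ 0 p]) (use X in auto)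
    have f2: "X \<inter> {p..} \<inter> {0..t} \<in> fmeasurable lborel" by (rule fmI[of _ 0 t]) (use X in auto)
    have "cm X t = measure lborel (X \<inter> {0..<p}) + measure lborel (X \<inter> {p..} \<inter> {0..t})"
      unfolding cm_def by (subst e, rule meas_Un_fm) (use f1 f2 in auto)
    then show ?thesis using meas_Ico_eq[OF X, of p] False by (simp add: cm_def max_def)
  qed
qed

lemma cm_Ico: "X \<in> sets lborel \<Longrightarrow> 0 \<le> p \<Longrightarrow> cm (X \<inter> {p..<q}) t = cm X (max p (min q t)) - cm X p"
proof -
  assume X: "X \<in> sets lborel" and p: "0 \<le> p"
  have "X \<inter> {p..<q} = (X \<inter> {p..}) \<inter> {..<q}" by auto
  then have "cm (X \<inter> {p..<q}) t = cm (X \<inter> {p..}) (min q t)" using cm_lt[of "X \<inter> {p..}" q t] X by simp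
  also have "\<dots> = cm X (max p (min q t)) - cm X p" using cm_ge[OF X p] by simp
  finally show ?thesis .
qed

lemma cm_const: "X \<in> sets lborel \<Longrightarrow> 0 \<le> a \<Longrightarrow> a \<le> b \<Longrightarrow> X \<inter> {a<..<b} = {} \<Longrightarrow> cm X b = cm X a"
proof -
  assume X: "X \<in> sets lborel" and a: "0 \<le> a" "a \<le> b" and e: "X \<inter> {a<..<b} = {}"
  have "X \<inter> {a<..b} \<subseteq> {b}" using e by auto
  then have "measure lborel (X \<inter> {a<..b}) \<le> measure lborel {b}"
    by (intro measure_mono_fmeasurable) (use X Icc_fm[of b b] in auto)
  then have "measure lborel (X \<inter> {a<..b}) = 0" using meas_single[of b] measure_nonneg[of lborel "X \<inter> {a<..b}"] by linarith
  then show ?thesis using cm_split[OF X a] by simp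
qed

lemma shift_sets: "Y \<in> sets lborel \<Longrightarrow> {x::real. x - d \<in> Y} \<in> sets lborel"
proof -
  assume Y: "Y \<in> sets lborel"
  have m: "(\<lambda>x::real. x - d) \<in> borel_measurable borel" by simp
  have "(\<lambda>x::real. x - d) -` Y \<inter> space borel \<in> sets borel" using measurable_sets[OF m] Y by simp
  then show ?thesis by (simp add: vimage_def)
qed

lemma meas_transl: "Y \<in> sets lborel \<Longrightarrow> measure lborel {x::real. x - d \<in> Y} = measure lborel Y"
proof -
  assume Y: "Y \<in> sets lborel"
  have m: "((+) (-d)) \<in> measurable lborel (borel :: real measure)" by simp
  have "measure (distr lborel borel ((+) (-d))) Y = measure lborel (((+) (-d)) -` Y \<inter> space lborel)"
    by (rule measure_distr[OF m]) (use Y in simp)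
  moreover have "distr lborel borel ((+) (-d)) = (lborel :: real measure)" by (rule lborel_distr_plus)
  moreover have "((+) (-d)) -` Y \<inter> space lborel = {x. x - d \<in> Y}" by auto
  ultimately show ?thesis by simp
qed

lemma cm_shift: "X \<in> sets lborel \<Longrightarrow> 0 \<le> p \<Longrightarrow> 0 \<le> d \<Longrightarrow>
   cm ({x. x - d \<in> X} \<inter> {p+d..}) t = cm (X \<inter> {p..}) (t - d)"
proof -
  assume X: "X \<in> sets lborel" and p: "0 \<le> p" and d: "0 \<le> d"
  have e: "{x. x - d \<in> X} \<inter> {p+d..} \<inter> {0..t} = {x. x - d \<in> X \<inter> {p..} \<inter> {0..t-d}}"
    using p d by auto
  have "X \<inter> {p..} \<inter> {0..t-d} \<in> sets lborel" using X by simp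
  from meas_transl[OF this, of d] e show ?thesis unfolding cm_def by metis
qed

definition Sh :: "real \<Rightarrow> real \<Rightarrow> real \<Rightarrow> real set \<Rightarrow> real set" where
  "Sh \<tau> \<sigma> d X = (X \<inter> {..<\<tau>}) \<union> ({x. x - d \<in> X \<inter> {..<\<sigma>}} \<inter> {\<tau>+d..}) \<union> (X \<inter> {\<sigma>+d..})"

definition phi :: "real \<Rightarrow> real \<Rightarrow> real \<Rightarrow> (real \<Rightarrow> real) \<Rightarrow> real \<Rightarrow> real" where
  "phi \<tau> \<sigma> d f t = f (min \<tau> t) + f (min \<sigma> (max \<tau> (t - d))) - f \<tau> + f (max (\<sigma>+d) t) - f (\<sigma>+d)"

lemma Sh_sets: "X \<in> sets lborel \<Longrightarrow> Sh \<tau> \<sigma> d X \<in> sets lborel"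
  unfolding Sh_def using shift_sets[of "X \<inter> {..<\<sigma>}" d] by auto

lemma cm_Sh:
  assumes X: "X \<in> sets lborel" and "0 \<le> \<tau>" "\<tau> \<le> \<sigma>" "0 \<le> d"
  shows "cm (Sh \<tau> \<sigma> d X) t = phi \<tau> \<sigma> d (cm X) t"
proof -
  let ?A = "X \<inter> {..<\<tau>}"
  let ?B = "{x. x - d \<in> X \<inter> {..<\<sigma>}} \<inter> {\<tau>+d..}"
  let ?C = "X \<inter> {\<sigma>+d..}"
  have XA: "?A \<in> sets lborel" using X by simp
  have XB: "?B \<in> sets lborel" using shift_sets[of "X \<inter> {..<\<sigma>}" d] X by auto
  have XC: "?C \<in> sets lborel" using X by simp
  have d1: "(?A \<union> ?B) \<inter> ?C = {}" using assms by auto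
  have d2: "?A \<inter> ?B = {}" using assms by auto
  have "cm (Sh \<tau> \<sigma> d X) t = cm ?A t + cm ?B t + cm ?C t"
    unfolding Sh_def using cm_Un[OF sets.Un[OF XA XB] XC d1] cm_Un[OF XA XB d2] by simp
  moreover have "cm ?A t = cm X (min \<tau> t)" using cm_lt[OF X] .
  moreover have "cm ?B t = cm X (min \<sigma> (max \<tau> (t - d))) - cm X \<tau>"
  proof -
    have "cm ?B t = cm ((X \<inter> {..<\<sigma>}) \<inter> {\<tau>..}) (t - d)"
      using cm_shift[of "X \<inter> {..<\<sigma>}" \<tau> d t] X assms by simp
    also have "\<dots> = cm (X \<inter> {..<\<sigma>}) (max \<tau> (t - d)) - cm (X \<inter> {..<\<sigma>}) \<tau>"
      using cm_ge[of "X \<inter> {..<\<sigma>}" \<tau>] X assms by simp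
    also have "\<dots> = cm X (min \<sigma> (max \<tau> (t - d))) - cm X \<tau>"
      using cm_lt[OF X] assms by (simp add: min_def)
    finally show ?thesis .
  qed
  moreover have "cm ?C t = cm X (max (\<sigma>+d) t) - cm X (\<sigma>+d)" using cm_ge[OF X] assms by simp
  ultimately show ?thesis unfolding phi_def by simp
qed

lemma first_hit:
  fixes f :: "real \<Rightarrow> real"
  assumes f: "continuous_on UNIV f" and fa: "f a < c" and ab: "a \<le> b" and fb: "c \<le> f b"
  shows "\<exists>x. a < x \<and> x \<le> b \<and> f x = c \<and> (\<forall>s. a \<le> s \<longrightarrow> s < x \<longrightarrow> f s < c)"
proof -
  let ?Z = "{s. a \<le> s \<and> c \<le> f s}"
  have cl: "closed ?Z"
  proof -
    have "closed {s. c \<le> f s}" using f by (intro closed_Collect_le continuous_intros) auto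
    moreover have "closed {s::real. a \<le> s}" by (intro closed_Collect_le continuous_intros)
    ultimately have "closed ({s. a \<le> s} \<inter> {s. c \<le> f s})" by auto
    moreover have "?Z = {s. a \<le> s} \<inter> {s. c \<le> f s}" by auto
    ultimately show ?thesis by simp
  qed
  have ne: "?Z \<noteq> {}" using ab fb by auto
  have bb: "bdd_below ?Z" by (rule bdd_belowI[of _ a]) auto
  define x where "x = Inf ?Z"
  have xZ: "x \<in> ?Z" unfolding x_def by (rule closed_contains_Inf[OF ne bb cl])
  have low: "\<And>s. s \<in> ?Z \<Longrightarrow> x \<le> s" unfolding x_def by (rule cInf_lower[OF _ bb])
  have xb: "x \<le> b" using low[of b] ab fb by auto
  have ax: "a < x" using xZ fa by (cases "a = x") auto
  have below: "\<forall>s. a \<le> s \<longrightarrow> s < x \<longrightarrow> f s < c" using low by force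
  obtain y where y: "y \<ge> a" "y \<le> x" "f y = c"
    using IVT'[of f a c x] fa xZ ax continuous_on_subset[OF f] by fastforce
  have "y = x" using low[of y] y by auto
  then show ?thesis using ax xb y below by auto
qed

lemma compl_char:
  fixes f :: "real \<Rightarrow> real"
  assumes f: "continuous_on UNIV f" and neg: "\<And>s. s \<le> 0 \<Longrightarrow> f s < c" and fb: "c \<le> f b"
  shows "\<exists>x. 0 < x \<and> Inf {s. c \<le> f s} = x \<and> f x = c \<and> (\<forall>s<x. f s < c)"
proof -
  have b0: "0 \<le> b" using neg[of b] fb by force
  obtain x where x: "0 < x" "x \<le> b" "f x = c" "\<forall>s. 0 \<le> s \<longrightarrow> s < x \<longrightarrow> f s < c"
    using first_hit[OF f neg[of 0] b0 fb] by auto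
  have all: "\<forall>s<x. f s < c" using x(4) neg by (metis linorder_not_le order.strict_implies_order)
  have "Inf {s. c \<le> f s} = x"
    by (rule cInf_eq_minimum) (use x(3) all in \<open>auto simp: not_less[symmetric]\<close>)
  then show ?thesis using x all by auto
qed

lemma compl_eqI:
  fixes f :: "real \<Rightarrow> real"
  assumes "c \<le> f x" and "\<And>s. s < x \<Longrightarrow> f s < c"
  shows "Inf {s. c \<le> f s} = x"
  by (rule cInf_eq_minimum) (use assms in \<open>auto simp: not_less[symmetric]\<close>)

lemma left_limit_le:
  fixes f :: "real \<Rightarrow> real"
  assumes f: "continuous_on UNIV f" and ab: "a < b" and lt: "\<And>s. a \<le> s \<Longrightarrow> s < b \<Longrightarrow> f s \<le> c"
  shows "f b \<le> c"
proof -
  have "closure {a..<b} = {a..b}" using ab by simp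
  then show ?thesis
    using continuous_le_on_closure[of "{a..<b}" f b c] continuous_on_subset[OF f] lt ab by auto
qed

lemma Jsets: "(J :: real \<Rightarrow> nat option) \<in> measurable lborel (count_space UNIV) \<Longrightarrow> {u::real. J u = Some k} \<in> sets lborel"
  using measurable_sets[of J lborel "count_space UNIV" "{Some k}"] by (simp add: vimage_def)

lemma Jsets_None: "(J :: real \<Rightarrow> nat option) \<in> measurable lborel (count_space UNIV) \<Longrightarrow> {u::real. J u \<noteq> None} \<in> sets lborel"
  using measurable_sets[of J lborel "count_space UNIV" "-{None}"] by (simp add: vimage_def)

lemma Ssets1: "(S :: real \<Rightarrow> real) \<in> borel_measurable lborel \<Longrightarrow> {u::real. S u = 1} \<in> sets lborel"
proof -
  assume S: "S \<in> borel_measurable lborel"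
  show ?thesis using S by measurable
qed

lemma Ssets2: "(S :: real \<Rightarrow> real) \<in> borel_measurable lborel \<Longrightarrow> {u::real. S u \<noteq> 1} \<in> sets lborel"
proof -
  assume S: "S \<in> borel_measurable lborel"
  show ?thesis using S by measurable
qed

lemma JSsets:
  fixes J :: "real \<Rightarrow> nat option" and S :: "real \<Rightarrow> real"
  assumes J: "J \<in> measurable lborel (count_space UNIV)" and S: "S \<in> borel_measurable lborel"
  shows "{u. J u = Some k \<and> S u = 1} \<in> sets lborel" "{u. J u = Some k \<and> S u \<noteq> 1} \<in> sets lborel"
    "{u. J u \<noteq> None \<and> S u = 1} \<in> sets lborel" "{u. J u \<noteq> None \<and> S u \<noteq> 1} \<in> sets lborel"
proof -
  have e1: "{u. J u = Some k \<and> S u = 1} = {u. J u = Some k} \<inter> {u. S u = 1}" by auto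
  have e2: "{u. J u = Some k \<and> S u \<noteq> 1} = {u. J u = Some k} \<inter> {u. S u \<noteq> 1}" by auto
  have e3: "{u. J u \<noteq> None \<and> S u = 1} = {u. J u \<noteq> None} \<inter> {u. S u = 1}" by auto
  have e4: "{u. J u \<noteq> None \<and> S u \<noteq> 1} = {u. J u \<noteq> None} \<inter> {u. S u \<noteq> 1}" by auto
  show "{u. J u = Some k \<and> S u = 1} \<in> sets lborel" using Jsets[OF J] Ssets1[OF S] e1 by (metis sets.Int)
  show "{u. J u = Some k \<and> S u \<noteq> 1} \<in> sets lborel" using Jsets[OF J] Ssets2[OF S] e2 by (metis sets.Int)
  show "{u. J u \<noteq> None \<and> S u = 1} \<in> sets lborel" using Jsets_None[OF J] Ssets1[OF S] e3 by (metis sets.Int)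
  show "{u. J u \<noteq> None \<and> S u \<noteq> 1} \<in> sets lborel" using Jsets_None[OF J] Ssets2[OF S] e4 by (metis sets.Int)
qed

lemma work_formula:
  fixes J :: "real \<Rightarrow> nat option" and S :: "real \<Rightarrow> real"
  assumes J: "J \<in> measurable lborel (count_space UNIV)" and S: "S \<in> borel_measurable lborel"
    and sp: "\<And>u. J u = Some k \<Longrightarrow> S u = 1 \<or> S u = s2"
  shows "work J S k t = cm {u. J u = Some k \<and> S u = 1} t + s2 * cm {u. J u = Some k \<and> S u \<noteq> 1} t"
proof -
  note m1 = JSsets(1)[OF J S, of k] and m2 = JSsets(2)[OF J S, of k]
  let ?A = "{u. J u = Some k \<and> S u = 1} \<inter> {0..t}"
  let ?B = "{u. J u = Some k \<and> S u \<noteq> 1} \<inter> {0..t}"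
  have fA: "?A \<in> fmeasurable lborel" using m1 by (rule fm_Int_Icc)
  have fB: "?B \<in> fmeasurable lborel" using m2 by (rule fm_Int_Icc)
  have eq: "(\<lambda>u. indicator {0..t} u * (if J u = Some k then S u else 0)) = (\<lambda>u. indicator ?A u + s2 * indicator ?B u)"
  proof
    fix u
    show "indicator {0..t} u * (if J u = Some k then S u else 0) = indicator ?A u + s2 * indicator ?B u"
      using sp[of u] by (cases "u \<in> {0..t}"; cases "J u = Some k"; cases "S u = 1") (simp_all add: indicator_def)
  qed
  have iA: "integrable lborel (indicator ?A :: real \<Rightarrow> real)" using fA
    by (auto simp: fmeasurable_def intro!: integrable_real_indicator)
  have iB: "integrable lborel (indicator ?B :: real \<Rightarrow> real)" using fB
    by (auto simp: fmeasurable_def intro!: integrable_real_indicator)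
  have "work J S k t = integral\<^sup>L lborel (\<lambda>u. indicator ?A u + s2 * indicator ?B u)"
    unfolding work_def set_lebesgue_integral_def using eq by simp
  also have "\<dots> = integral\<^sup>L lborel (indicator ?A) + s2 * integral\<^sup>L lborel (indicator ?B)"
    using Bochner_Integration.integral_add[OF iA integrable_mult_right[OF iB, of s2]] by simp
  also have "\<dots> = measure lborel ?A + s2 * measure lborel ?B" by simp
  finally show ?thesis by (simp add: cm_def)
qed

lemma energy_formula:
  fixes J :: "real \<Rightarrow> nat option" and S :: "real \<Rightarrow> real"
  assumes J: "J \<in> measurable lborel (count_space UNIV)" and S: "S \<in> borel_measurable lborel"
    and L: "\<And>u. J u \<noteq> None \<Longrightarrow> 0 \<le> u \<and> u \<le> L"
  shows "energy 1 P1 P2 J S = P1 * cm {u. J u \<noteq> None \<and> S u = 1} L + P2 * cm {u. J u \<noteq> None \<and> S u \<noteq> 1} L"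
proof -
  note m1 = JSsets(3)[OF J S] and m2 = JSsets(4)[OF J S]
  let ?A = "{u. J u \<noteq> None \<and> S u = 1} \<inter> {0..L}"
  let ?B = "{u. J u \<noteq> None \<and> S u \<noteq> 1} \<inter> {0..L}"
  have fA: "?A \<in> fmeasurable lborel" using m1 by (rule fm_Int_Icc)
  have fB: "?B \<in> fmeasurable lborel" using m2 by (rule fm_Int_Icc)
  have eq: "(\<lambda>u. indicator {0..} u * power 1 P1 P2 J S u) = (\<lambda>u. P1 * indicator ?A u + P2 * indicator ?B u)"
  proof
    fix u
    show "indicator {0..} u * power 1 P1 P2 J S u = P1 * indicator ?A u + P2 * indicator ?B u"
      using L[of u] by (cases "J u = None"; cases "S u = 1") (auto simp add: indicator_def power_def)
  qed
  have iA: "integrable lborel (indicator ?A :: real \<Rightarrow> real)" using fA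
    by (auto simp: fmeasurable_def intro!: integrable_real_indicator)
  have iB: "integrable lborel (indicator ?B :: real \<Rightarrow> real)" using fB
    by (auto simp: fmeasurable_def intro!: integrable_real_indicator)
  have "energy 1 P1 P2 J S = integral\<^sup>L lborel (\<lambda>u. P1 * indicator ?A u + P2 * indicator ?B u)"
    unfolding energy_def set_lebesgue_integral_def using eq by simp
  also have "\<dots> = P1 * integral\<^sup>L lborel (indicator ?A) + P2 * integral\<^sup>L lborel (indicator ?B)"
    using Bochner_Integration.integral_add[OF integrable_mult_right[OF iA, of P1] integrable_mult_right[OF iB, of P2]] by simp
  also have "\<dots> = P1 * measure lborel ?A + P2 * measure lborel ?B" by simp
  finally show ?thesis by (simp add: cm_def)
qed


locale fsched =
  fixes m :: nat and v r :: "nat \<Rightarrow> real" and s2 :: real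
    and J :: "real \<Rightarrow> nat option" and S :: "real \<Rightarrow> real"
  assumes feas: "feasible m v r 1 s2 J S" and s2: "1 < s2"
    and vpos: "\<And>k. k \<in> {1..m} \<Longrightarrow> 0 < v k" and rnn: "\<And>k. k \<in> {1..m} \<Longrightarrow> 0 \<le> r k"
begin

lemma Jm: "J \<in> measurable lborel (count_space UNIV)" using feas by (simp add: feasible_def)
lemma Sm: "S \<in> borel_measurable lborel" using feas by (simp add: feasible_def)

lemma Jprop: "J t = Some k \<Longrightarrow> k \<in> {1..m} \<and> r k \<le> t \<and> work J S k t < v k \<and> (S t = 1 \<or> S t = s2)"
  using feas by (simp add: feasible_def)

lemma Jdone: "k \<in> {1..m} \<Longrightarrow> \<exists>t. v k \<le> work J S k t"
  using feas by (simp add: feasible_def)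

abbreviation "B1 k \<equiv> {u. J u = Some k \<and> S u = 1}"
abbreviation "B2 k \<equiv> {u. J u = Some k \<and> S u \<noteq> 1}"
abbreviation "Bk k \<equiv> {u. J u = Some k}"

lemma B1s: "B1 k \<in> sets lborel" by (rule JSsets(1)[OF Jm Sm])
lemma B2s: "B2 k \<in> sets lborel" by (rule JSsets(2)[OF Jm Sm])
lemma Bks: "Bk k \<in> sets lborel" by (rule Jsets[OF Jm])

lemma wf: "work J S k t = cm (B1 k) t + s2 * cm (B2 k) t"
  by (rule work_formula[OF Jm Sm]) (use Jprop in blast)

lemma wcont: "continuous_on UNIV (\<lambda>t. work J S k t)"
  unfolding wf by (intro continuous_intros cm_cont B1s B2s)

lemma wmono: "s \<le> t \<Longrightarrow> work J S k s \<le> work J S k t"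
  unfolding wf using cm_mono[OF B1s, of s t k] cm_mono[OF B2s, of s t k] s2
  by (simp add: add_mono)

lemma wnonneg: "0 \<le> work J S k t"
  unfolding wf using cm_nonneg[of "B1 k" t] cm_nonneg[of "B2 k" t] s2 by simp

lemma Bk_r: "Bk k \<subseteq> {r k..}" using Jprop by auto

lemma wzero: "k \<in> {1..m} \<Longrightarrow> t \<le> r k \<Longrightarrow> work J S k t = 0"
proof -
  assume k: "k \<in> {1..m}" and t: "t \<le> r k"
  have r0: "0 \<le> r k" using rnn[OF k] .
  have a: "B1 k = B1 k \<inter> {r k..}" "B2 k = B2 k \<inter> {r k..}" using Bk_r[of k] by auto
  have "cm (B1 k) t = 0" using cm_ge[OF B1s r0, of k t] a(1) t by (simp add: max_def)
  moreover have "cm (B2 k) t = 0" using cm_ge[OF B2s r0, of k t] a(2) t by (simp add: max_def)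
  ultimately show ?thesis by (simp add: wf)
qed

lemma wout: "k \<notin> {1..m} \<Longrightarrow> work J S k t = 0"
proof -
  assume k: "k \<notin> {1..m}"
  then have "B1 k = {}" "B2 k = {}" using Jprop by auto
  then show ?thesis by (simp add: wf cm_def)
qed

definition C :: "nat \<Rightarrow> real" where "C k = compl v J S k"

lemma Cprops:
  assumes k: "k \<in> {1..m}"
  shows "0 < C k" "work J S k (C k) = v k" "\<And>s. s < C k \<Longrightarrow> work J S k s < v k"
proof -
  obtain b where b: "v k \<le> work J S k b" using Jdone[OF k] by auto
  have neg: "\<And>s. s \<le> 0 \<Longrightarrow> work J S k s < v k"
    using wzero[OF k] rnn[OF k] vpos[OF k] by force
  obtain x where x: "0 < x" "Inf {s. v k \<le> work J S k s} = x" "work J S k x = v k" "\<forall>s<x. work J S k s < v k"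
    using compl_char[OF wcont neg b] by blast
  have "C k = x" using x(2) by (simp add: C_def compl_def)
  then show "0 < C k" "work J S k (C k) = v k" "\<And>s. s < C k \<Longrightarrow> work J S k s < v k" using x by auto
qed

lemma Bk_C: "k \<in> {1..m} \<Longrightarrow> Bk k \<subseteq> {..<C k}"
proof
  fix t assume k: "k \<in> {1..m}" and t: "t \<in> Bk k"
  have "work J S k t < v k" using Jprop t by auto
  then show "t \<in> {..<C k}" using wmono[of "C k" t k] Cprops(2)[OF k] by force
qed

lemma wafter: "k \<in> {1..m} \<Longrightarrow> C k \<le> t \<Longrightarrow> work J S k t = v k"
proof -
  assume k: "k \<in> {1..m}" and t: "C k \<le> t"
  have c0: "0 \<le> C k" using Cprops(1)[OF k] by simp
  have e1: "B1 k \<inter> {C k<..<t} = {}" "B2 k \<inter> {C k<..<t} = {}" using Bk_C[OF k] by auto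
  have "cm (B1 k) t = cm (B1 k) (C k)" by (rule cm_const[OF B1s c0 t e1(1)])
  moreover have "cm (B2 k) t = cm (B2 k) (C k)" by (rule cm_const[OF B2s c0 t e1(2)])
  ultimately show ?thesis using Cprops(2)[OF k] by (simp add: wf)
qed

lemma wle: "work J S k t \<le> v k" if "k \<in> {1..m}"
  using wafter[OF that, of t] Cprops(3)[OF that, of t] by (cases "C k \<le> t") auto

lemma rC: "k \<in> {1..m} \<Longrightarrow> r k < C k"
proof (rule ccontr)
  assume k: "k \<in> {1..m}" and "\<not> r k < C k"
  then have "work J S k (C k) = 0" using wzero[OF k, of "C k"] by simp
  then show False using Cprops(2)[OF k] vpos[OF k] by simp
qed

definition Cmax where "Cmax = Max (C ` {1..m})"

lemma C_le_Cmax: "k \<in> {1..m} \<Longrightarrow> C k \<le> Cmax"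
  unfolding Cmax_def by (rule Max_ge) auto

lemma busy_bound: "J t \<noteq> None \<Longrightarrow> 0 \<le> t \<and> t \<le> Cmax"
proof -
  assume "J t \<noteq> None"
  then obtain k where k: "J t = Some k" by auto
  then have "k \<in> {1..m}" "r k \<le> t" using Jprop by auto
  moreover have "t < C k" using Bk_C[of k] k \<open>k \<in> {1..m}\<close> by auto
  ultimately show ?thesis using rnn C_le_Cmax by force
qed

lemma energy_eq: "Cmax \<le> L \<Longrightarrow> energy 1 P1 P2 J S = P1 * cm {u. J u \<noteq> None \<and> S u = 1} L + P2 * cm {u. J u \<noteq> None \<and> S u \<noteq> 1} L"
  by (rule energy_formula[OF Jm Sm]) (use busy_bound in force)

lemma flow_eq: "flow m v r J S = (\<Sum>k\<in>{1..m}. C k - r k)"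
  by (simp add: flow_def C_def)

end


lemma phi_lin: "phi \<tau> \<sigma> d (\<lambda>t. f t + c * g t) t = phi \<tau> \<sigma> d f t + c * phi \<tau> \<sigma> d g t"
  by (simp add: phi_def algebra_simps)

lemma phi_cases:
  assumes "\<tau> \<le> \<sigma>" "0 \<le> d"
  shows "t \<le> \<tau> \<Longrightarrow> phi \<tau> \<sigma> d f t = f t"
    and "\<tau> \<le> t \<Longrightarrow> t \<le> \<tau> + d \<Longrightarrow> phi \<tau> \<sigma> d f t = f \<tau>"
    and "\<tau> + d \<le> t \<Longrightarrow> t \<le> \<sigma> + d \<Longrightarrow> phi \<tau> \<sigma> d f t = f (t - d)"
    and "\<sigma> + d \<le> t \<Longrightarrow> f (\<sigma> + d) = f \<sigma> \<Longrightarrow> phi \<tau> \<sigma> d f t = f t"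
proof -
  show "t \<le> \<tau> \<Longrightarrow> phi \<tau> \<sigma> d f t = f t" using assms by (auto simp: phi_def min_def max_def)
  show "\<tau> \<le> t \<Longrightarrow> t \<le> \<tau> + d \<Longrightarrow> phi \<tau> \<sigma> d f t = f \<tau>"
  proof -
    assume a: "\<tau> \<le> t" "t \<le> \<tau> + d"
    have e1: "max \<tau> (t - d) = \<tau>" using a by simp
    have e2: "min \<tau> t = \<tau>" using a by simp
    show ?thesis
    proof (cases "t \<le> \<sigma> + d")
      case True then show ?thesis using assms e1 e2 by (simp add: phi_def min_def max_def)
    next
      case False
      then have "\<sigma> = \<tau>" "t = \<tau> + d" using a assms by auto
      then show ?thesis using assms by (simp add: phi_def)
    qed
  qed
  show "\<tau> + d \<le> t \<Longrightarrow> t \<le> \<sigma> + d \<Longrightarrow> phi \<tau> \<sigma> d f t = f (t - d)"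
  proof -
    assume a: "\<tau> + d \<le> t" "t \<le> \<sigma> + d"
    have e1: "max \<tau> (t - d) = t - d" using a by simp
    have e3: "min \<sigma> (t - d) = t - d" using a by simp
    have e2: "min \<tau> t = \<tau>" using a assms by simp
    have e4: "max (\<sigma> + d) t = \<sigma> + d" using a by simp
    show ?thesis unfolding phi_def using e1 e2 e3 e4 by simp
  qed
  show "\<sigma> + d \<le> t \<Longrightarrow> f (\<sigma> + d) = f \<sigma> \<Longrightarrow> phi \<tau> \<sigma> d f t = f t"
  proof -
    assume a: "\<sigma> + d \<le> t" "f (\<sigma> + d) = f \<sigma>"
    have e1: "max \<tau> (t - d) = t - d" using a assms by simp
    have e3: "min \<sigma> (t - d) = \<sigma>" using a by simp
    have e2: "min \<tau> t = \<tau>" using a assms by simp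
    have e4: "max (\<sigma> + d) t = t" using a by simp
    show ?thesis unfolding phi_def using e1 e2 e3 e4 a by simp
  qed
qed

locale modA = fsched +
  fixes j :: nat and \<tau> \<sigma> a :: real and A :: "real set"
  assumes j: "j \<in> {1..m}" and tau: "r j \<le> \<tau>" "0 \<le> \<tau>" "\<tau> < C j" and sig: "C j \<le> \<sigma>"
    and apos: "0 < a" and idle: "\<And>t. \<sigma> \<le> t \<Longrightarrow> t < \<sigma> + (s2 - 1) * a \<Longrightarrow> J t = None"
    and As: "A \<in> sets lborel" and Asub: "A \<subseteq> B2 j \<inter> {..<\<tau>}" and Ameas: "measure lborel A = a"
begin

definition "d = (s2 - 1) * a"

lemma dpos: "0 < d" using s2 apos by (simp add: d_def)

lemma ts: "\<tau> \<le> \<sigma>" using tau sig by simp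

definition J' :: "real \<Rightarrow> nat option" where
  "J' t = (if t < \<tau> then J t else if t < \<tau> + d then Some j else if t < \<sigma> + d then J (t - d) else J t)"

definition S' :: "real \<Rightarrow> real" where
  "S' t = (if t < \<tau> then (if t \<in> A then 1 else S t) else if t < \<tau> + d then 1 else if t < \<sigma> + d then S (t - d) else S t)"

lemma J'm: "J' \<in> measurable lborel (count_space UNIV)"
proof -
  have sh: "(\<lambda>t. J (t - d)) \<in> measurable lborel (count_space UNIV)"
    by (rule measurable_compose[OF _ Jm]) simp
  show ?thesis unfolding J'_def
    by (intro measurable_If Jm sh) auto
qed

lemma S'm: "S' \<in> borel_measurable lborel"
proof -
  have sh: "(\<lambda>t. S (t - d)) \<in> borel_measurable lborel"
    by (rule measurable_compose[OF _ Sm]) simp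
  have a: "(\<lambda>t. if t \<in> A then 1 else S t) \<in> borel_measurable lborel"
    by (intro measurable_If Sm) (use As in auto)
  show ?thesis unfolding S'_def
    by (intro measurable_If Sm sh a) auto
qed

lemma Ain: "u \<in> A \<Longrightarrow> J u = Some j \<and> S u \<noteq> 1 \<and> u < \<tau>" using Asub by auto
lemma Alt: "u \<in> A \<Longrightarrow> u < \<tau>" using Asub by auto
lemma AS: "u \<in> A \<Longrightarrow> S u \<noteq> 1" using Asub by auto
lemma AJ: "u \<in> A \<Longrightarrow> J u = Some j" using Asub by auto

lemma set1: "{u. Q (J' u) \<and> S' u = 1} = Sh \<tau> \<sigma> d {u. Q (J u) \<and> S u = 1} \<union> (if Q (Some j) then A \<union> {\<tau>..<\<tau>+d} else {})"
proof (rule set_eqI)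
  fix u
  show "u \<in> {u. Q (J' u) \<and> S' u = 1} \<longleftrightarrow> u \<in> Sh \<tau> \<sigma> d {u. Q (J u) \<and> S u = 1} \<union> (if Q (Some j) then A \<union> {\<tau>..<\<tau>+d} else {})"
  proof (cases "u < \<tau>")
    case True
    then show ?thesis using Ain[of u] dpos by (auto simp: J'_def S'_def Sh_def)
  next
    case F1: False
    show ?thesis
    proof (cases "u < \<tau> + d")
      case True
      then show ?thesis using Ain[of u] dpos F1 ts by (auto simp: J'_def S'_def Sh_def)
    next
      case F2: False
      show ?thesis
      proof (cases "u < \<sigma> + d")
        case True
        then show ?thesis using Ain[of u] dpos F1 F2 ts by (auto simp: J'_def S'_def Sh_def)
      next
        case False
        then show ?thesis using Ain[of u] dpos F1 F2 ts by (auto simp: J'_def S'_def Sh_def)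
      qed
    qed
  qed
qed

lemma set2: "{u. Q (J' u) \<and> S' u \<noteq> 1} = Sh \<tau> \<sigma> d {u. Q (J u) \<and> S u \<noteq> 1} - (if Q (Some j) then A else {})"
proof (rule set_eqI)
  fix u
  show "u \<in> {u. Q (J' u) \<and> S' u \<noteq> 1} \<longleftrightarrow> u \<in> Sh \<tau> \<sigma> d {u. Q (J u) \<and> S u \<noteq> 1} - (if Q (Some j) then A else {})"
  proof (cases "u < \<tau>")
    case True
    then show ?thesis using Ain[of u] dpos by (auto simp: J'_def S'_def Sh_def)
  next
    case F1: False
    show ?thesis
    proof (cases "u < \<tau> + d")
      case True
      then show ?thesis using Ain[of u] dpos F1 ts by (auto simp: J'_def S'_def Sh_def)
    next
      case F2: False
      show ?thesis
      proof (cases "u < \<sigma> + d")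
        case True
        then show ?thesis using Ain[of u] dpos F1 F2 ts by (auto simp: J'_def S'_def Sh_def)
      next
        case False
        then show ?thesis using Ain[of u] dpos F1 F2 ts by (auto simp: J'_def S'_def Sh_def)
      qed
    qed
  qed
qed

lemma QJsets: "{u. Q (J u)} \<in> sets lborel"
  using measurable_sets[OF Jm, of "{x. Q x}"] by (simp add: vimage_def)

lemma QJS1: "{u. Q (J u) \<and> S u = 1} \<in> sets lborel"
proof -
  have "{u. Q (J u) \<and> S u = 1} = {u. Q (J u)} \<inter> {u. S u = 1}" by auto
  then show ?thesis using QJsets[of Q] Ssets1[OF Sm] by (metis sets.Int)
qed

lemma QJS2: "{u. Q (J u) \<and> S u \<noteq> 1} \<in> sets lborel"
proof -
  have "{u. Q (J u) \<and> S u \<noteq> 1} = {u. Q (J u)} \<inter> {u. S u \<noteq> 1}" by auto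
  then show ?thesis using QJsets[of Q] Ssets2[OF Sm] by (metis sets.Int)
qed

lemma Ico_s: "{\<tau>..<\<tau>+d} \<in> sets lborel" by simp

lemma cmQ1: "cm {u. Q (J' u) \<and> S' u = 1} t = phi \<tau> \<sigma> d (cm {u. Q (J u) \<and> S u = 1}) t
   + (if Q (Some j) then cm A t + cm {\<tau>..<\<tau>+d} t else 0)"
proof (cases "Q (Some j)")
  case True
  let ?X = "{u. Q (J u) \<and> S u = 1}"
  have d1: "Sh \<tau> \<sigma> d ?X \<inter> (A \<union> {\<tau>..<\<tau>+d}) = {}"
  proof -
    { fix x assume x: "x \<in> Sh \<tau> \<sigma> d ?X" "x \<in> A \<union> {\<tau>..<\<tau>+d}"
      have False
      proof (cases "x \<in> A")
        case True
        then have "x < \<tau>" "S x \<noteq> 1" using Alt AS by auto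
        then show False using x(1) dpos ts by (auto simp: Sh_def)
      next
        case False
        then have "\<tau> \<le> x" "x < \<tau> + d" using x(2) by auto
        then show False using x(1) dpos ts by (auto simp: Sh_def)
      qed }
    then show ?thesis by blast
  qed
  have d2: "A \<inter> {\<tau>..<\<tau>+d} = {}" using Alt by force
  have "cm {u. Q (J' u) \<and> S' u = 1} t = cm (Sh \<tau> \<sigma> d ?X \<union> (A \<union> {\<tau>..<\<tau>+d})) t"
    using set1[of Q] True by simp
  also have "\<dots> = cm (Sh \<tau> \<sigma> d ?X) t + cm (A \<union> {\<tau>..<\<tau>+d}) t"
    by (rule cm_Un[OF Sh_sets[OF QJS1] _ d1]) (use As in simp)
  also have "cm (A \<union> {\<tau>..<\<tau>+d}) t = cm A t + cm {\<tau>..<\<tau>+d} t"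
    by (rule cm_Un[OF As Ico_s d2])
  also have "cm (Sh \<tau> \<sigma> d ?X) t = phi \<tau> \<sigma> d (cm ?X) t"
    by (rule cm_Sh[OF QJS1 tau(2) ts]) (use dpos in simp)
  finally show ?thesis using True by simp
next
  case False
  then show ?thesis using set1[of Q] cm_Sh[OF QJS1 tau(2) ts, of d Q] dpos by simp
qed

lemma cmQ2: "cm {u. Q (J' u) \<and> S' u \<noteq> 1} t = phi \<tau> \<sigma> d (cm {u. Q (J u) \<and> S u \<noteq> 1}) t
   - (if Q (Some j) then cm A t else 0)"
proof (cases "Q (Some j)")
  case True
  let ?X = "{u. Q (J u) \<and> S u \<noteq> 1}"
  have sub: "A \<subseteq> Sh \<tau> \<sigma> d ?X" using Ain True by (auto simp: Sh_def)
  have "cm {u. Q (J' u) \<and> S' u \<noteq> 1} t = cm (Sh \<tau> \<sigma> d ?X - A) t"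
    using set2[of Q] True by simp
  also have "\<dots> = cm (Sh \<tau> \<sigma> d ?X) t - cm A t"
    by (rule cm_Diff[OF Sh_sets[OF QJS2] As sub])
  also have "cm (Sh \<tau> \<sigma> d ?X) t = phi \<tau> \<sigma> d (cm ?X) t"
    by (rule cm_Sh[OF QJS2 tau(2) ts]) (use dpos in simp)
  finally show ?thesis using True by simp
next
  case False
  then show ?thesis using set2[of Q] cm_Sh[OF QJS2 tau(2) ts, of d Q] dpos by simp
qed

definition E :: "real \<Rightarrow> real" where "E t = (1 - s2) * cm A t + cm {\<tau>..<\<tau>+d} t"

lemma A_bound: "A \<subseteq> {0..\<tau>}" using Ain Jprop j rnn[OF j] tau by force

lemma cmA_after: "\<tau> \<le> t \<Longrightarrow> cm A t = a"
proof -
  assume t: "\<tau> \<le> t"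
  have "A \<inter> {0..t} = A" using A_bound t by auto
  then show ?thesis using Ameas by (simp add: cm_def)
qed

lemma cmA_le: "cm A t \<le> a"
proof -
  have "cm A t \<le> cm A (max t \<tau>)" by (rule cm_mono[OF As]) simp
  then show ?thesis using cmA_after[of "max t \<tau>"] by simp
qed

lemma cmI: "cm {\<tau>..<\<tau>+d} t = (if t \<le> \<tau> then 0 else if t \<le> \<tau> + d then t - \<tau> else d)"
proof -
  have "cm (UNIV \<inter> {\<tau>..<\<tau>+d}) t = cm UNIV (max \<tau> (min (\<tau>+d) t)) - cm UNIV \<tau>"
    by (rule cm_Ico) (use tau in auto)
  moreover have "\<And>x. 0 \<le> x \<Longrightarrow> cm UNIV x = x" by (simp add: cm_def)
  ultimately show ?thesis using tau dpos by (auto simp: max_def min_def)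
qed

lemma E_le: "E t \<le> 0"
proof (cases "t \<le> \<tau>")
  case True
  then show ?thesis using cm_nonneg[of A t] s2 cmI[of t] by (simp add: E_def mult_nonpos_nonneg)
next
  case False
  then show ?thesis using cmA_after[of t] cmI[of t] by (auto simp: E_def d_def algebra_simps)
qed

lemma E_zero: "\<tau> + d \<le> t \<Longrightarrow> E t = 0"
  using cmA_after[of t] cmI[of t] dpos by (auto simp: E_def d_def algebra_simps)

lemma w': "work J' S' k t = phi \<tau> \<sigma> d (\<lambda>t. work J S k t) t + (if k = j then E t else 0)"
proof -
  have sp: "S' u = 1 \<or> S' u = s2" if "J' u = Some k" for u
  proof -
    consider (a) "u < \<tau>" | (b) "\<not> u < \<tau>" "u < \<tau> + d" | (c) "\<not> u < \<tau> + d" "u < \<sigma> + d" | (e) "\<not> u < \<sigma> + d" by linarith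
    then show ?thesis
    proof cases
      case a then show ?thesis using that Jprop[of u k] by (simp add: J'_def S'_def)
    next
      case b then show ?thesis using that by (simp add: J'_def S'_def)
    next
      case c
      then have "\<not> u < \<tau>" using dpos by linarith
      then show ?thesis using c that Jprop[of "u - d" k] by (simp add: J'_def S'_def)
    next
      case e
      then have "\<not> u < \<tau>" "\<not> u < \<tau> + d" using dpos ts by linarith+
      then show ?thesis using e that Jprop[of u k] by (simp add: J'_def S'_def)
    qed
  qed
  have "work J' S' k t = cm {u. J' u = Some k \<and> S' u = 1} t + s2 * cm {u. J' u = Some k \<and> S' u \<noteq> 1} t"
    by (rule work_formula[OF J'm S'm sp])
  also have "\<dots> = phi \<tau> \<sigma> d (cm (B1 k)) t + s2 * phi \<tau> \<sigma> d (cm (B2 k)) t + (if k = j then E t else 0)"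
    unfolding cmQ1[of "\<lambda>x. x = Some k" t] cmQ2[of "\<lambda>x. x = Some k" t] by (simp add: E_def algebra_simps)
  also have "phi \<tau> \<sigma> d (cm (B1 k)) t + s2 * phi \<tau> \<sigma> d (cm (B2 k)) t = phi \<tau> \<sigma> d (\<lambda>t. work J S k t) t"
    unfolding wf by (rule phi_lin[symmetric])
  finally show ?thesis .
qed

end


context modA begin

lemma sig0: "0 \<le> \<sigma>" using Cprops(1)[OF j] sig by simp

lemma widle: "work J S k (\<sigma> + d) = work J S k \<sigma>"
proof -
  have e1: "B1 k \<inter> {\<sigma><..<\<sigma>+d} = {}" "B2 k \<inter> {\<sigma><..<\<sigma>+d} = {}" using idle by (auto simp: d_def)
  have "cm (B1 k) (\<sigma> + d) = cm (B1 k) \<sigma>" by (rule cm_const[OF B1s sig0 _ e1(1)]) (use dpos in simp)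
  moreover have "cm (B2 k) (\<sigma> + d) = cm (B2 k) \<sigma>" by (rule cm_const[OF B2s sig0 _ e1(2)]) (use dpos in simp)
  ultimately show ?thesis by (simp add: wf)
qed

definition C2 :: "nat \<Rightarrow> real" where
  "C2 k = (if C k \<le> \<tau> then C k else if C k \<le> \<sigma> then C k + d else C k)"

lemma w'_le: "work J' S' k t \<le> phi \<tau> \<sigma> d (\<lambda>t. work J S k t) t"
  using w'[of k t] E_le[of t] by auto

lemma w'_ge: "\<tau> + d \<le> t \<Longrightarrow> work J' S' k t = phi \<tau> \<sigma> d (\<lambda>t. work J S k t) t"
  using w'[of k t] E_zero[of t] by auto

lemmas pc = phi_cases[OF ts less_imp_le[OF dpos]]

lemma phi_lt:
  assumes k: "k \<in> {1..m}" and s: "s < C k + d" and sC: "\<tau> < C k" and s': "s \<le> \<sigma> + d \<or> s < C k"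
  shows "phi \<tau> \<sigma> d (\<lambda>t. work J S k t) s < v k"
proof -
  consider (a) "s \<le> \<tau>" | (b) "\<tau> \<le> s" "s \<le> \<tau> + d" | (c) "\<tau> + d \<le> s" "s \<le> \<sigma> + d" | (e) "\<sigma> + d \<le> s" "s < C k"
    using s' by linarith
  then show ?thesis
  proof cases
    case a then show ?thesis using pc(1)[of s] Cprops(3)[OF k, of s] sC by simp
  next
    case b then show ?thesis using pc(2)[of s] Cprops(3)[OF k, of \<tau>] sC by simp
  next
    case c then show ?thesis using pc(3)[of s] Cprops(3)[OF k, of "s - d"] s by simp
  next
    case e then show ?thesis using pc(4)[of s] widle[of k] Cprops(3)[OF k, of s] by simp
  qed
qed

lemma Cbig: "k \<in> {1..m} \<Longrightarrow> \<sigma> < C k \<Longrightarrow> \<sigma> + d \<le> C k"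
proof (rule ccontr)
  assume k: "k \<in> {1..m}" and sC: "\<sigma> < C k" and "\<not> \<sigma> + d \<le> C k"
  then have "work J S k (C k) \<le> work J S k (\<sigma> + d)" using wmono by simp
  then show False using widle[of k] Cprops(2)[OF k] Cprops(3)[OF k, of \<sigma>] sC by simp
qed

lemma Cnew:
  assumes k: "k \<in> {1..m}"
  shows "work J' S' k (C2 k) = v k" "\<And>s. s < C2 k \<Longrightarrow> work J' S' k s < v k"
proof -
  consider (a) "C k \<le> \<tau>" | (b) "\<tau> < C k" "C k \<le> \<sigma>" | (c) "\<sigma> < C k" by linarith
  then have "work J' S' k (C2 k) = v k \<and> (\<forall>s < C2 k. work J' S' k s < v k)"
  proof cases
    case a
    then have kj: "k \<noteq> j" using tau by auto
    have "C2 k = C k" using a by (simp add: C2_def)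
    moreover have "work J' S' k t = work J S k t" if "t \<le> \<tau>" for t
      using w'[of k t] kj pc(1)[OF that] by simp
    ultimately show ?thesis using a Cprops(2,3)[OF k] by auto
  next
    case b
    have c2: "C2 k = C k + d" using b by (simp add: C2_def)
    have "work J' S' k (C k + d) = work J S k (C k)"
      using w'_ge[of "C k + d" k] pc(3)[of "C k + d"] b dpos by simp
    moreover have "work J' S' k s < v k" if "s < C k + d" for s
      using w'_le[of k s] phi_lt[OF k that b(1)] that b(2) by fastforce
    ultimately show ?thesis using c2 Cprops(2)[OF k] by auto
  next
    case c
    have c2: "C2 k = C k" using c ts by (simp add: C2_def)
    have kj: "k \<noteq> j" using c sig by auto
    have big: "\<sigma> + d \<le> C k" using Cbig[OF k c] .
    have "work J' S' k (C k) = work J S k (C k)"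
      using w'[of k "C k"] kj pc(4)[OF big widle[of k]] by simp
    moreover have "work J' S' k s < v k" if "s < C k" for s
    proof -
      have "phi \<tau> \<sigma> d (\<lambda>t. work J S k t) s < v k"
        by (rule phi_lt[OF k]) (use that c ts dpos in auto)
      then show ?thesis using w'_le[of k s] by linarith
    qed
    ultimately show ?thesis using c2 Cprops(2)[OF k] by auto
  qed
  then show "work J' S' k (C2 k) = v k" "\<And>s. s < C2 k \<Longrightarrow> work J' S' k s < v k" by auto
qed

end


context modA begin

lemma C_le_C2: "C k \<le> C2 k" using dpos by (simp add: C2_def)

lemma C2j: "C2 j = C j + d" using tau sig by (simp add: C2_def)

lemma J'prop:
  assumes "J' t = Some k"
  shows "k \<in> {1..m} \<and> r k \<le> t \<and> t < C2 k \<and> (S' t = 1 \<or> S' t = s2)"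
proof -
  consider (a) "t < \<tau>" | (b) "\<not> t < \<tau>" "t < \<tau> + d" | (c) "\<not> t < \<tau> + d" "t < \<sigma> + d" | (e) "\<not> t < \<sigma> + d" by linarith
  then show ?thesis
  proof cases
    case a
    then have J: "J t = Some k" using assms by (simp add: J'_def)
    have "t < C k" using Bk_C[of k] Jprop[OF J] J by auto
    then show ?thesis using Jprop[OF J] C_le_C2[of k] a by (auto simp: S'_def)
  next
    case b
    then have "k = j" using assms by (simp add: J'_def)
    then show ?thesis using b j tau C2j by (auto simp: S'_def)
  next
    case c
    then have nt: "\<not> t < \<tau>" using dpos by linarith
    then have J: "J (t - d) = Some k" using assms c by (simp add: J'_def)
    have k: "k \<in> {1..m}" using Jprop[OF J] by simp
    have tC: "t - d < C k" using Bk_C[OF k] J by auto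
    have "t < C2 k"
    proof (cases "C k \<le> \<sigma>")
      case True
      then have "C2 k = C k + d" using tC c by (simp add: C2_def)
      then show ?thesis using tC by simp
    next
      case False
      then have "C2 k = C k" using ts by (simp add: C2_def)
      then show ?thesis using Cbig[OF k] False c by simp
    qed
    then show ?thesis using Jprop[OF J] c nt dpos by (auto simp: S'_def)
  next
    case e
    then have nt: "\<not> t < \<tau>" "\<not> t < \<tau> + d" using dpos ts by linarith+
    then have J: "J t = Some k" using assms e by (simp add: J'_def)
    have k: "k \<in> {1..m}" using Jprop[OF J] by simp
    have tC: "t < C k" using Bk_C[OF k] J by auto
    then have "C2 k = C k" using e ts dpos by (simp add: C2_def)
    then show ?thesis using Jprop[OF J] tC e nt by (auto simp: S'_def)
  qed
qed

lemma feas': "feasible m v r 1 s2 J' S'"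
proof -
  have "\<forall>t k. J' t = Some k \<longrightarrow> k \<in> {1..m} \<and> r k \<le> t \<and> work J' S' k t < v k \<and> (S' t = 1 \<or> S' t = s2)"
    using J'prop Cnew(2) by blast
  moreover have "\<forall>k\<in>{1..m}. \<exists>t. v k \<le> work J' S' k t"
  proof
    fix k assume k: "k \<in> {1..m}"
    show "\<exists>t. v k \<le> work J' S' k t" using Cnew(1)[OF k] by (intro exI[of _ "C2 k"]) simp
  qed
  ultimately show ?thesis using J'm S'm by (simp add: feasible_def)
qed

lemma compl': "k \<in> {1..m} \<Longrightarrow> compl v J' S' k = C2 k"
  unfolding compl_def by (rule compl_eqI) (use Cnew in auto)

lemma flow': "flow m v r J' S' = flow m v r J S + d * card {k \<in> {1..m}. \<tau> < C k \<and> C k \<le> \<sigma>}"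
proof -
  have "flow m v r J' S' = (\<Sum>k\<in>{1..m}. C2 k - r k)" unfolding flow_def using compl' by simp
  also have "\<dots> = (\<Sum>k\<in>{1..m}. (C k - r k) + (if \<tau> < C k \<and> C k \<le> \<sigma> then d else 0))"
    by (rule sum.cong) (auto simp: C2_def)
  also have "\<dots> = flow m v r J S + (\<Sum>k\<in>{1..m}. if \<tau> < C k \<and> C k \<le> \<sigma> then d else 0)"
    by (simp add: sum.distrib flow_eq)
  also have "(\<Sum>k\<in>{1..m}. if \<tau> < C k \<and> C k \<le> \<sigma> then d else 0) = d * card {k \<in> {1..m}. \<tau> < C k \<and> C k \<le> \<sigma>}"
    by (simp add: sum.inter_filter[symmetric])
  finally show ?thesis .
qed

definition "L = max Cmax \<sigma> + d"

lemma busy': "J' t \<noteq> None \<Longrightarrow> 0 \<le> t \<and> t \<le> L"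
proof -
  assume "J' t \<noteq> None"
  then obtain k where k: "J' t = Some k" by auto
  then have p: "k \<in> {1..m}" "r k \<le> t" "t < C2 k" using J'prop by auto
  have "C2 k \<le> C k + d" using dpos by (simp add: C2_def)
  then show ?thesis using p rnn[of k] C_le_Cmax[of k] by (simp add: L_def)
qed

lemma energy': "energy 1 P1 P2 J' S' = energy 1 P1 P2 J S + P1 * (a + d) - P2 * a"
proof -
  let ?Q = "\<lambda>x::nat option. x \<noteq> None"
  have e': "energy 1 P1 P2 J' S' = P1 * cm {u. J' u \<noteq> None \<and> S' u = 1} L + P2 * cm {u. J' u \<noteq> None \<and> S' u \<noteq> 1} L"
    by (rule energy_formula[OF J'm S'm busy'])
  have e: "energy 1 P1 P2 J S = P1 * cm {u. J u \<noteq> None \<and> S u = 1} L + P2 * cm {u. J u \<noteq> None \<and> S u \<noteq> 1} L"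
    by (rule energy_eq) (use dpos in \<open>simp add: L_def\<close>)
  have Lb: "\<sigma> + d \<le> L" by (simp add: L_def)
  have i1: "cm {u. J u \<noteq> None \<and> S u = 1} (\<sigma> + d) = cm {u. J u \<noteq> None \<and> S u = 1} \<sigma>"
    by (rule cm_const[OF QJS1 sig0]) (use dpos idle in \<open>auto simp: d_def\<close>)
  have i2: "cm {u. J u \<noteq> None \<and> S u \<noteq> 1} (\<sigma> + d) = cm {u. J u \<noteq> None \<and> S u \<noteq> 1} \<sigma>"
    by (rule cm_const[OF QJS2 sig0]) (use dpos idle in \<open>auto simp: d_def\<close>)
  have c1: "cm {u. J' u \<noteq> None \<and> S' u = 1} L = cm {u. J u \<noteq> None \<and> S u = 1} L + a + d"
    using cmQ1[of ?Q L] pc(4)[OF Lb i1] cmA_after[of L] cmI[of L] Lb ts dpos by simp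
  have c2: "cm {u. J' u \<noteq> None \<and> S' u \<noteq> 1} L = cm {u. J u \<noteq> None \<and> S u \<noteq> 1} L - a"
    using cmQ2[of ?Q L] pc(4)[OF Lb i2] cmA_after[of L] Lb ts dpos by simp
  show ?thesis unfolding e e' c1 c2 by (simp add: algebra_simps)
qed

end


context fsched begin

lemma Rs1: "{x::real. x = 1} \<in> sets borel" using borel_closed[OF closed_singleton[of "1::real"]] by simp
lemma Rs2: "{x::real. x \<noteq> 1} \<in> sets borel"
proof -
  have "{x::real. x \<noteq> 1} = - {1}" by auto
  then show ?thesis using borel_open[OF open_Compl[OF closed_singleton[of "1::real"]]] by simp
qed

lemma RJS: "{x::real. R x} \<in> sets borel \<Longrightarrow> {u. J u = Some k \<and> R (S u)} \<in> sets lborel"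
proof -
  assume Rs: "{x::real. R x} \<in> sets borel"
  have "{u. R (S u)} \<in> sets lborel" using measurable_sets[OF Sm Rs] by (simp add: vimage_def)
  moreover have "{u. J u = Some k \<and> R (S u)} = {u. J u = Some k} \<inter> {u. R (S u)}" by auto
  ultimately show ?thesis using Bks[of k] by (metis sets.Int)
qed

lemma R_cm_work: "work J S k t = cm {u. J u = Some k \<and> S u = 1} t + s2 * cm {u. J u = Some k \<and> S u \<noteq> 1} t"
  by (rule wf)

end

locale modE = fsched +
  fixes a b :: nat and \<rho> \<theta> :: real
  assumes ab: "a \<in> {1..m}" "b \<in> {1..m}" "a \<noteq> b" and rr: "r a \<le> \<rho>" "r b \<le> \<rho>"
    and rt: "\<rho> \<le> \<theta>" and tC: "\<theta> < C a" "\<theta> < C b"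
    and Gt: "work J S a \<theta> - work J S a \<rho> + work J S b \<theta> - work J S b \<rho> = v a - work J S a \<rho>"
    and Gs: "\<And>s. \<rho> \<le> s \<Longrightarrow> s < \<theta> \<Longrightarrow> work J S a s - work J S a \<rho> + work J S b s - work J S b \<rho> < v a - work J S a \<rho>"
begin

lemma rho0: "0 \<le> \<rho>" using rr rnn[OF ab(1)] by simp

definition J' :: "real \<Rightarrow> nat option" where
  "J' t = (if \<rho> \<le> t \<and> (J t = Some a \<or> J t = Some b) then (if t < \<theta> then Some a else Some b) else J t)"

lemma J'm: "J' \<in> measurable lborel (count_space UNIV)"
proof -
  have s1: "{x \<in> space lborel. \<rho> \<le> x \<and> (J x = Some a \<or> J x = Some b)} \<in> sets lborel"
  proof -
    have "{x \<in> space lborel. \<rho> \<le> x \<and> (J x = Some a \<or> J x = Some b)} = {\<rho>..} \<inter> (Bk a \<union> Bk b)" by auto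
    then show ?thesis using Bks[of a] Bks[of b] by simp
  qed
  show ?thesis unfolding J'_def
    by (intro measurable_If Jm s1) auto
qed

lemma setA: "{u. J' u = Some a \<and> R (S u)} = ({u. J u = Some a \<and> R (S u)} \<inter> {..<\<rho>}) \<union>
   (({u. J u = Some a \<and> R (S u)} \<union> {u. J u = Some b \<and> R (S u)}) \<inter> {\<rho>..<\<theta>})"
  using ab(3) by (auto simp: J'_def)

lemma setB: "{u. J' u = Some b \<and> R (S u)} = ({u. J u = Some b \<and> R (S u)} \<inter> {..<\<rho>}) \<union>
   (({u. J u = Some a \<and> R (S u)} \<union> {u. J u = Some b \<and> R (S u)}) \<inter> {\<theta>..})"
  using ab(3) rt by (auto simp: J'_def)

lemma setK: "k \<noteq> a \<Longrightarrow> k \<noteq> b \<Longrightarrow> {u. J' u = Some k \<and> R (S u)} = {u. J u = Some k \<and> R (S u)}"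
  by (auto simp: J'_def)

lemma cmA: "{x::real. R x} \<in> sets borel \<Longrightarrow> cm {u. J' u = Some a \<and> R (S u)} t = cm {u. J u = Some a \<and> R (S u)} (min \<rho> t)
   + (cm {u. J u = Some a \<and> R (S u)} (max \<rho> (min \<theta> t)) - cm {u. J u = Some a \<and> R (S u)} \<rho>)
   + (cm {u. J u = Some b \<and> R (S u)} (max \<rho> (min \<theta> t)) - cm {u. J u = Some b \<and> R (S u)} \<rho>)"
proof -
  assume Rs: "{x::real. R x} \<in> sets borel"
  note RJS = RJS[OF Rs]
  let ?X = "{u. J u = Some a \<and> R (S u)}" and ?Y = "{u. J u = Some b \<and> R (S u)}"
  have XY: "?X \<inter> ?Y = {}" using ab(3) by auto
  have d: "(?X \<inter> {..<\<rho>}) \<inter> ((?X \<union> ?Y) \<inter> {\<rho>..<\<theta>}) = {}" by auto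
  have "cm {u. J' u = Some a \<and> R (S u)} t = cm (?X \<inter> {..<\<rho>}) t + cm ((?X \<union> ?Y) \<inter> {\<rho>..<\<theta>}) t"
    unfolding setA by (rule cm_Un[OF _ _ d]) (use RJS in auto)
  also have "cm (?X \<inter> {..<\<rho>}) t = cm ?X (min \<rho> t)" by (rule cm_lt[OF RJS])
  also have "cm ((?X \<union> ?Y) \<inter> {\<rho>..<\<theta>}) t = cm (?X \<union> ?Y) (max \<rho> (min \<theta> t)) - cm (?X \<union> ?Y) \<rho>"
    by (rule cm_Ico[OF _ rho0]) (use RJS in auto)
  finally show ?thesis using cm_Un[OF RJS RJS XY] by simp
qed

lemma cmB: "{x::real. R x} \<in> sets borel \<Longrightarrow> cm {u. J' u = Some b \<and> R (S u)} t = cm {u. J u = Some b \<and> R (S u)} (min \<rho> t)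
   + (cm {u. J u = Some a \<and> R (S u)} (max \<theta> t) - cm {u. J u = Some a \<and> R (S u)} \<theta>)
   + (cm {u. J u = Some b \<and> R (S u)} (max \<theta> t) - cm {u. J u = Some b \<and> R (S u)} \<theta>)"
proof -
  assume Rs: "{x::real. R x} \<in> sets borel"
  note RJS = RJS[OF Rs]
  let ?X = "{u. J u = Some a \<and> R (S u)}" and ?Y = "{u. J u = Some b \<and> R (S u)}"
  have XY: "?X \<inter> ?Y = {}" using ab(3) by auto
  have d: "(?Y \<inter> {..<\<rho>}) \<inter> ((?X \<union> ?Y) \<inter> {\<theta>..}) = {}" using rt by auto
  have t0: "0 \<le> \<theta>" using rho0 rt by simp
  have "cm {u. J' u = Some b \<and> R (S u)} t = cm (?Y \<inter> {..<\<rho>}) t + cm ((?X \<union> ?Y) \<inter> {\<theta>..}) t"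
    unfolding setB by (rule cm_Un[OF _ _ d]) (use RJS in auto)
  also have "cm (?Y \<inter> {..<\<rho>}) t = cm ?Y (min \<rho> t)" by (rule cm_lt[OF RJS])
  also have "cm ((?X \<union> ?Y) \<inter> {\<theta>..}) t = cm (?X \<union> ?Y) (max \<theta> t) - cm (?X \<union> ?Y) \<theta>"
    by (rule cm_ge[OF _ t0]) (use RJS in auto)
  finally show ?thesis using cm_Un[OF RJS RJS XY] by simp
qed

lemma sp': "J' u = Some k \<Longrightarrow> S u = 1 \<or> S u = s2"
  using Jprop by (auto simp: J'_def split: if_splits)

lemma wA: "work J' S a t = work J S a (min \<rho> t) + (work J S a (max \<rho> (min \<theta> t)) - work J S a \<rho>)
   + (work J S b (max \<rho> (min \<theta> t)) - work J S b \<rho>)"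
proof -
  have w: "work J' S a t = cm {u. J' u = Some a \<and> S u = 1} t + s2 * cm {u. J' u = Some a \<and> S u \<noteq> 1} t"
    by (rule work_formula[OF J'm Sm sp'])
  show ?thesis unfolding w cmA[of "\<lambda>x. x = 1" t, OF Rs1] cmA[of "\<lambda>x. x \<noteq> 1" t, OF Rs2] wf
    by (simp add: algebra_simps)
qed

lemma wB: "work J' S b t = work J S b (min \<rho> t) + (work J S a (max \<theta> t) - work J S a \<theta>)
   + (work J S b (max \<theta> t) - work J S b \<theta>)"
proof -
  have w: "work J' S b t = cm {u. J' u = Some b \<and> S u = 1} t + s2 * cm {u. J' u = Some b \<and> S u \<noteq> 1} t"
    by (rule work_formula[OF J'm Sm sp'])
  show ?thesis unfolding w cmB[of "\<lambda>x. x = 1" t, OF Rs1] cmB[of "\<lambda>x. x \<noteq> 1" t, OF Rs2] wf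
    by (simp add: algebra_simps)
qed

lemma wK: "k \<noteq> a \<Longrightarrow> k \<noteq> b \<Longrightarrow> work J' S k t = work J S k t"
proof -
  assume k: "k \<noteq> a" "k \<noteq> b"
  have w: "work J' S k t = cm {u. J' u = Some k \<and> S u = 1} t + s2 * cm {u. J' u = Some k \<and> S u \<noteq> 1} t"
    by (rule work_formula[OF J'm Sm sp'])
  show ?thesis unfolding w setK[OF k, of "\<lambda>x. x = 1"] setK[OF k, of "\<lambda>x. x \<noteq> 1"] wf by simp
qed

end


context modE begin

lemma G_rel: "work J S a \<theta> + work J S b \<theta> = v a + work J S b \<rho>" using Gt by simp

lemma a_ok: "work J' S a \<theta> = v a" "\<And>s. s < \<theta> \<Longrightarrow> work J' S a s < v a"
proof -
  show "work J' S a \<theta> = v a" using wA[of \<theta>] rt Gt by (simp add: min_def max_def)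
  fix s assume s: "s < \<theta>"
  show "work J' S a s < v a"
  proof (cases "s < \<rho>")
    case True
    then have "work J' S a s = work J S a s" using wA[of s] rt by (simp add: min_def max_def)
    then show ?thesis using Cprops(3)[OF ab(1), of s] True rt tC by simp
  next
    case False
    then have "work J' S a s = work J S a \<rho> + (work J S a s - work J S a \<rho> + work J S b s - work J S b \<rho>)"
      using wA[of s] s by (simp add: min_def max_def)
    then show ?thesis using Gs[of s] False s by simp
  qed
qed

definition "M = max (C a) (C b)"

lemma b_ok: "work J' S b M = v b" "\<And>s. s < M \<Longrightarrow> work J' S b s < v b"
proof -
  have after: "work J' S b t = work J S a t + work J S b t - v a" if "\<theta> \<le> t" for t
    using wB[of t] that rt G_rel by (simp add: min_def max_def)
  have Mt: "\<theta> \<le> M" using tC by (simp add: M_def)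
  show "work J' S b M = v b" using after[OF Mt] wafter[OF ab(1), of M] wafter[OF ab(2), of M] by (simp add: M_def)
  fix s assume s: "s < M"
  show "work J' S b s < v b"
  proof (cases "\<theta> \<le> s")
    case True
    have "work J S a s + work J S b s < v a + v b"
    proof (cases "s < C a")
      case True then show ?thesis using Cprops(3)[OF ab(1), of s] wle[OF ab(2), of s] by simp
    next
      case False then have "s < C b" using s by (simp add: M_def)
      then show ?thesis using Cprops(3)[OF ab(2), of s] wle[OF ab(1), of s] by simp
    qed
    then show ?thesis using after[OF True] by simp
  next
    case False
    then have "work J' S b s = work J S b (min \<rho> s)" using wB[of s] by (simp add: max_def)
    moreover have "work J S b (min \<rho> s) < v b" using Cprops(3)[OF ab(2), of "min \<rho> s"] rt tC by simp
    ultimately show ?thesis by simp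
  qed
qed

lemma J'prop: "J' t = Some k \<Longrightarrow> k \<in> {1..m} \<and> r k \<le> t \<and> work J' S k t < v k \<and> (S t = 1 \<or> S t = s2)"
proof -
  assume J't: "J' t = Some k"
  show ?thesis
  proof (cases "\<rho> \<le> t \<and> (J t = Some a \<or> J t = Some b)")
    case True
    then obtain c where c: "J t = Some c" "c = a \<or> c = b" by auto
    have sp: "S t = 1 \<or> S t = s2" using Jprop[OF c(1)] by simp
    have tc: "t < C c" using Bk_C[of c] c ab by auto
    show ?thesis
    proof (cases "t < \<theta>")
      case True
      then have "k = a" using J't True \<open>\<rho> \<le> t \<and> _\<close> unfolding J'_def by (simp split: if_splits)
      then show ?thesis using a_ok(2)[OF True] ab rr \<open>\<rho> \<le> t \<and> _\<close> sp by auto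
    next
      case False
      then have "k = b" using J't c \<open>\<rho> \<le> t \<and> _\<close> by (auto simp: J'_def)
      moreover have "t < M" using tc c by (auto simp: M_def)
      ultimately show ?thesis using b_ok(2) ab rr \<open>\<rho> \<le> t \<and> _\<close> sp by auto
    qed
  next
    case False
    then have J: "J t = Some k" using J't unfolding J'_def by (simp only: if_False)
    note P = Jprop[OF J]
    have "work J' S k t < v k"
    proof (cases "k = a \<or> k = b")
      case True
      then have tr: "t < \<rho>" using False J by auto
      show ?thesis
      proof (cases "k = a")
        case True
        then show ?thesis using a_ok(2)[of t] tr rt by simp
      next
        case False
        then have kb: "k = b" using \<open>k = a \<or> k = b\<close> by simp
        have "work J' S b t = work J S b t" using wB[of t] tr rt by (simp add: min_def max_def)
        then show ?thesis using P kb by simp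
      qed
    next
      case False then show ?thesis using wK[of k t] P by simp
    qed
    then show ?thesis using P by simp
  qed
qed

lemma feas': "feasible m v r 1 s2 J' S"
proof -
  have "\<forall>k\<in>{1..m}. \<exists>t. v k \<le> work J' S k t"
  proof
    fix k assume k: "k \<in> {1..m}"
    show "\<exists>t. v k \<le> work J' S k t"
    proof (cases "k = a")
      case True then show ?thesis using a_ok(1) by (intro exI[of _ \<theta>]) simp
    next
      case F: False
      show ?thesis
      proof (cases "k = b")
        case True then show ?thesis using b_ok(1) by (intro exI[of _ M]) simp
      next
        case False then show ?thesis using wK[OF F False] Cprops(2)[OF k] by (intro exI[of _ "C k"]) simp
      qed
    qed
  qed
  then show ?thesis using J'prop J'm Sm by (simp add: feasible_def)
qed

lemma compl_a: "compl v J' S a = \<theta>"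
  unfolding compl_def by (rule compl_eqI) (use a_ok in auto)
lemma compl_b: "compl v J' S b = M"
  unfolding compl_def by (rule compl_eqI) (use b_ok in auto)
lemma compl_k: "k \<in> {1..m} \<Longrightarrow> k \<noteq> a \<Longrightarrow> k \<noteq> b \<Longrightarrow> compl v J' S k = C k"
  unfolding compl_def using wK C_def compl_def by simp

lemma flow': "flow m v r J' S = flow m v r J S + (\<theta> - C a) + (M - C b)"
proof -
  have "flow m v r J' S = (\<Sum>k\<in>{1..m}. C k - r k + (if k = a then \<theta> - C a else 0) + (if k = b then M - C b else 0))"
    unfolding flow_def by (rule sum.cong) (use compl_a compl_b compl_k ab(3) in auto)
  also have "\<dots> = flow m v r J S + (\<theta> - C a) + (M - C b)"
    using ab by (simp add: sum.distrib flow_eq)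
  finally show ?thesis .
qed

lemma energy': "energy 1 P1 P2 J' S = energy 1 P1 P2 J S"
proof -
  have "power 1 P1 P2 J' S t = power 1 P1 P2 J S t" for t
    by (auto simp: power_def J'_def)
  then show ?thesis by (simp add: energy_def)
qed

lemma improve: "flow m v r J' S + energy 1 P1 P2 J' S < flow m v r J S + energy 1 P1 P2 J S"
  using flow' energy' tC by (simp add: M_def max_def)

end


locale modF = fsched +
  fixes a :: nat and \<rho> \<theta> :: real
  assumes a: "a \<in> {1..m}" and ra: "r a \<le> \<rho>" and rt: "\<rho> \<le> \<theta>" and tC: "\<theta> < C a"
    and Ht: "work J S a \<theta> - work J S a \<rho> + cm {u. J u = None} \<theta> - cm {u. J u = None} \<rho> = v a - work J S a \<rho>"
    and Hs: "\<And>s. \<rho> \<le> s \<Longrightarrow> s < \<theta> \<Longrightarrow> work J S a s - work J S a \<rho> + cm {u. J u = None} s - cm {u. J u = None} \<rho> < v a - work J S a \<rho>"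
begin

abbreviation "Idle \<equiv> {u. J u = None}"

lemma rho0: "0 \<le> \<rho>" using ra rnn[OF a] by simp
lemma th0: "0 \<le> \<theta>" using rho0 rt by simp

lemma Idles: "Idle \<in> sets lborel"
proof -
  have "Idle = UNIV - {u. J u \<noteq> None}" by auto
  then show ?thesis using Jsets_None[OF Jm] by simp
qed

definition J' :: "real \<Rightarrow> nat option" where
  "J' t = (if \<rho> \<le> t \<and> t < \<theta> \<and> (J t = Some a \<or> J t = None) then Some a
           else if \<theta> \<le> t \<and> J t = Some a then None else J t)"

definition S' :: "real \<Rightarrow> real" where "S' t = (if J t = None then 1 else S t)"

lemma J'm: "J' \<in> measurable lborel (count_space UNIV)"
proof -
  have s1: "{x \<in> space lborel. \<rho> \<le> x \<and> x < \<theta> \<and> (J x = Some a \<or> J x = None)} \<in> sets lborel"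
  proof -
    have "{x \<in> space lborel. \<rho> \<le> x \<and> x < \<theta> \<and> (J x = Some a \<or> J x = None)} = {\<rho>..<\<theta>} \<inter> (Bk a \<union> Idle)" by auto
    then show ?thesis using Bks[of a] Idles by simp
  qed
  have s2: "{x \<in> space lborel. \<theta> \<le> x \<and> J x = Some a} \<in> sets lborel"
  proof -
    have "{x \<in> space lborel. \<theta> \<le> x \<and> J x = Some a} = {\<theta>..} \<inter> Bk a" by auto
    then show ?thesis using Bks[of a] by simp
  qed
  show ?thesis unfolding J'_def
    by (intro measurable_If Jm s1 s2) auto
qed

lemma S'm: "S' \<in> borel_measurable lborel"
  unfolding S'_def by (intro measurable_If Sm) (use Idles in auto)

lemma sp': "J' u = Some k \<Longrightarrow> S' u = 1 \<or> S' u = s2"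
  using Jprop by (auto simp: J'_def S'_def split: if_splits)

lemma setA1: "{u. J' u = Some a \<and> S' u = 1} = (B1 a \<inter> {..<\<theta>}) \<union> (Idle \<inter> {\<rho>..<\<theta>})"
  by (auto simp: J'_def S'_def)
lemma setA2: "{u. J' u = Some a \<and> S' u \<noteq> 1} = B2 a \<inter> {..<\<theta>}"
  by (auto simp: J'_def S'_def)
lemma setK1: "k \<noteq> a \<Longrightarrow> {u. J' u = Some k \<and> S' u = 1} = B1 k"
  by (auto simp: J'_def S'_def)
lemma setK2: "k \<noteq> a \<Longrightarrow> {u. J' u = Some k \<and> S' u \<noteq> 1} = B2 k"
  by (auto simp: J'_def S'_def)

lemma wA: "work J' S' a t = work J S a (min \<theta> t) + (cm Idle (max \<rho> (min \<theta> t)) - cm Idle \<rho>)"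
proof -
  have w: "work J' S' a t = cm {u. J' u = Some a \<and> S' u = 1} t + s2 * cm {u. J' u = Some a \<and> S' u \<noteq> 1} t"
    by (rule work_formula[OF J'm S'm sp'])
  have d: "(B1 a \<inter> {..<\<theta>}) \<inter> (Idle \<inter> {\<rho>..<\<theta>}) = {}" by auto
  have "cm {u. J' u = Some a \<and> S' u = 1} t = cm (B1 a) (min \<theta> t) + (cm Idle (max \<rho> (min \<theta> t)) - cm Idle \<rho>)"
  proof -
    have "cm ((B1 a \<inter> {..<\<theta>}) \<union> (Idle \<inter> {\<rho>..<\<theta>})) t = cm (B1 a \<inter> {..<\<theta>}) t + cm (Idle \<inter> {\<rho>..<\<theta>}) t"
      by (rule cm_Un[OF _ _ d]) (use B1s Idles in auto)
    then show ?thesis unfolding setA1 cm_lt[OF B1s] cm_Ico[OF Idles rho0] by simp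
  qed
  moreover have "cm {u. J' u = Some a \<and> S' u \<noteq> 1} t = cm (B2 a) (min \<theta> t)"
    unfolding setA2 cm_lt[OF B2s] ..
  ultimately show ?thesis unfolding w wf by (simp add: algebra_simps)
qed

lemma wK: "k \<noteq> a \<Longrightarrow> work J' S' k t = work J S k t"
proof -
  assume k: "k \<noteq> a"
  have w: "work J' S' k t = cm {u. J' u = Some k \<and> S' u = 1} t + s2 * cm {u. J' u = Some k \<and> S' u \<noteq> 1} t"
    by (rule work_formula[OF J'm S'm sp'])
  show ?thesis unfolding w setK1[OF k] setK2[OF k] wf ..
qed

lemma a_ok: "work J' S' a \<theta> = v a" "\<And>s. s < \<theta> \<Longrightarrow> work J' S' a s < v a"
proof -
  show "work J' S' a \<theta> = v a" using wA[of \<theta>] rt Ht by (simp add: min_def max_def)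
  fix s assume s: "s < \<theta>"
  show "work J' S' a s < v a"
  proof (cases "s < \<rho>")
    case True
    then have "work J' S' a s = work J S a s" using wA[of s] rt by (simp add: min_def max_def)
    then show ?thesis using Cprops(3)[OF a, of s] True rt tC by simp
  next
    case False
    then have "work J' S' a s = work J S a \<rho> + (work J S a s - work J S a \<rho> + cm Idle s - cm Idle \<rho>)"
      using wA[of s] s by (simp add: min_def max_def)
    then show ?thesis using Hs[of s] False s by simp
  qed
qed

lemma J'prop: "J' t = Some k \<Longrightarrow> k \<in> {1..m} \<and> r k \<le> t \<and> work J' S' k t < v k \<and> (S' t = 1 \<or> S' t = s2)"
proof -
  assume J't: "J' t = Some k"
  have sp: "S' t = 1 \<or> S' t = s2" using sp'[OF J't] .
  show ?thesis
  proof (cases "\<rho> \<le> t \<and> t < \<theta> \<and> (J t = Some a \<or> J t = None)")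
    case True
    then have "k = a" using J't by (simp add: J'_def)
    then show ?thesis using a_ok(2)[of t] True a ra sp by auto
  next
    case F1: False
    show ?thesis
    proof (cases "\<theta> \<le> t \<and> J t = Some a")
      case True then show ?thesis using J't F1 by (simp add: J'_def)
    next
      case False
      then have J: "J t = Some k" using J't F1 unfolding J'_def by (simp only: if_False)
      note P = Jprop[OF J]
      have "work J' S' k t < v k"
      proof (cases "k = a")
        case True
        then have "t < \<rho>" using F1 False J by auto
        then show ?thesis using a_ok(2)[of t] rt True by simp
      next
        case False then show ?thesis using wK[OF False, of t] P by simp
      qed
      then show ?thesis using P sp by simp
    qed
  qed
qed

lemma feas': "feasible m v r 1 s2 J' S'"
proof -
  have "\<forall>k\<in>{1..m}. \<exists>t. v k \<le> work J' S' k t"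
  proof
    fix k assume k: "k \<in> {1..m}"
    show "\<exists>t. v k \<le> work J' S' k t"
    proof (cases "k = a")
      case True then show ?thesis using a_ok(1) by (intro exI[of _ \<theta>]) simp
    next
      case False then show ?thesis using wK[OF False] Cprops(2)[OF k] by (intro exI[of _ "C k"]) simp
    qed
  qed
  then show ?thesis using J'prop J'm S'm by (simp add: feasible_def)
qed

lemma compl_a: "compl v J' S' a = \<theta>"
  unfolding compl_def by (rule compl_eqI) (use a_ok in auto)
lemma compl_k: "k \<noteq> a \<Longrightarrow> compl v J' S' k = C k"
  unfolding compl_def using wK C_def compl_def by simp

lemma flow': "flow m v r J' S' = flow m v r J S + (\<theta> - C a)"
proof -
  have "flow m v r J' S' = (\<Sum>k\<in>{1..m}. C k - r k + (if k = a then \<theta> - C a else 0))"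
    unfolding flow_def by (rule sum.cong) (use compl_a compl_k in auto)
  also have "\<dots> = flow m v r J S + (\<theta> - C a)"
    using a by (simp add: sum.distrib flow_eq)
  finally show ?thesis .
qed

lemma busy': "J' t \<noteq> None \<Longrightarrow> 0 \<le> t \<and> t \<le> Cmax"
proof -
  assume "J' t \<noteq> None"
  then show ?thesis
  proof (cases "\<rho> \<le> t \<and> t < \<theta> \<and> (J t = Some a \<or> J t = None)")
    case True then show ?thesis using rho0 tC C_le_Cmax[OF a] by auto
  next
    case False
    then have "J t \<noteq> None" using \<open>J' t \<noteq> None\<close> by (auto simp: J'_def split: if_splits)
    then show ?thesis by (rule busy_bound)
  qed
qed

lemma energy_le:
  assumes P: "P1 * s2 \<le> P2"
  shows "energy 1 P1 P2 J' S' \<le> energy 1 P1 P2 J S"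
proof -
  let ?L = Cmax
  let ?U1 = "{u. J u \<noteq> None \<and> S u = 1}" and ?U2 = "{u. J u \<noteq> None \<and> S u \<noteq> 1}"
  have U1s: "?U1 \<in> sets lborel" and U2s: "?U2 \<in> sets lborel" using JSsets(3,4)[OF Jm Sm] by auto
  have e': "energy 1 P1 P2 J' S' = P1 * cm {u. J' u \<noteq> None \<and> S' u = 1} ?L + P2 * cm {u. J' u \<noteq> None \<and> S' u \<noteq> 1} ?L"
    by (rule energy_formula[OF J'm S'm busy'])
  have e: "energy 1 P1 P2 J S = P1 * cm ?U1 ?L + P2 * cm ?U2 ?L" by (rule energy_eq) simp
  have tL: "\<theta> \<le> ?L" using tC C_le_Cmax[OF a] by simp
  have s1: "{u. J' u \<noteq> None \<and> S' u = 1} = (?U1 - (B1 a \<inter> {\<theta>..})) \<union> (Idle \<inter> {\<rho>..<\<theta>})"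
    by (auto simp: J'_def S'_def)
  have s2': "{u. J' u \<noteq> None \<and> S' u \<noteq> 1} = ?U2 - (B2 a \<inter> {\<theta>..})"
    by (auto simp: J'_def S'_def)
  have B1t: "B1 a \<inter> {\<theta>..} \<in> sets lborel" and B2t: "B2 a \<inter> {\<theta>..} \<in> sets lborel" using B1s B2s by auto
  have c1: "cm {u. J' u \<noteq> None \<and> S' u = 1} ?L = cm ?U1 ?L - (cm (B1 a) ?L - cm (B1 a) \<theta>) + (cm Idle \<theta> - cm Idle \<rho>)"
  proof -
    have d: "(?U1 - (B1 a \<inter> {\<theta>..})) \<inter> (Idle \<inter> {\<rho>..<\<theta>}) = {}" by auto
    have "cm {u. J' u \<noteq> None \<and> S' u = 1} ?L = cm (?U1 - (B1 a \<inter> {\<theta>..})) ?L + cm (Idle \<inter> {\<rho>..<\<theta>}) ?L"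
      unfolding s1 by (rule cm_Un[OF _ _ d]) (use U1s B1t Idles in auto)
    also have "cm (?U1 - (B1 a \<inter> {\<theta>..})) ?L = cm ?U1 ?L - cm (B1 a \<inter> {\<theta>..}) ?L"
      by (rule cm_Diff[OF U1s B1t]) auto
    also have "cm (B1 a \<inter> {\<theta>..}) ?L = cm (B1 a) ?L - cm (B1 a) \<theta>" using cm_ge[OF B1s th0, of a ?L] tL by simp
    also have "cm (Idle \<inter> {\<rho>..<\<theta>}) ?L = cm Idle \<theta> - cm Idle \<rho>" using cm_Ico[OF Idles rho0, of \<theta> ?L] tL rt by simp
    finally show ?thesis .
  qed
  have c2: "cm {u. J' u \<noteq> None \<and> S' u \<noteq> 1} ?L = cm ?U2 ?L - (cm (B2 a) ?L - cm (B2 a) \<theta>)"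
  proof -
    have "cm {u. J' u \<noteq> None \<and> S' u \<noteq> 1} ?L = cm ?U2 ?L - cm (B2 a \<inter> {\<theta>..}) ?L"
      unfolding s2' by (rule cm_Diff[OF U2s B2t]) auto
    also have "cm (B2 a \<inter> {\<theta>..}) ?L = cm (B2 a) ?L - cm (B2 a) \<theta>" using cm_ge[OF B2s th0, of a ?L] tL by simp
    finally show ?thesis .
  qed
  have wL: "work J S a ?L = v a" by (rule wafter[OF a C_le_Cmax[OF a]])
  have idl: "cm Idle \<theta> - cm Idle \<rho> = (cm (B1 a) ?L - cm (B1 a) \<theta>) + s2 * (cm (B2 a) ?L - cm (B2 a) \<theta>)"
    using Ht wL unfolding wf by (simp add: algebra_simps)
  have D: "0 \<le> cm (B2 a) ?L - cm (B2 a) \<theta>" using cm_mono[OF B2s tL] by simp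
  have "energy 1 P1 P2 J' S' = energy 1 P1 P2 J S + (P1 * s2 - P2) * (cm (B2 a) ?L - cm (B2 a) \<theta>)"
    unfolding e e' c1 c2 idl by (simp add: algebra_simps)
  moreover have "(P1 * s2 - P2) * (cm (B2 a) ?L - cm (B2 a) \<theta>) \<le> 0"
    using P D by (simp add: mult_nonpos_nonneg)
  ultimately show ?thesis by simp
qed

lemma improve: "P1 * s2 \<le> P2 \<Longrightarrow> flow m v r J' S' + energy 1 P1 P2 J' S' < flow m v r J S + energy 1 P1 P2 J S"
  using flow' energy_le[of P1 P2] tC by simp

end


locale optsched = fsched +
  fixes P1 P2 :: real
  assumes P: "P1 * s2 \<le> P2"
    and opt: "\<And>J' S'. feasible m v r 1 s2 J' S' \<Longrightarrow>
       flow m v r J S + energy 1 P1 P2 J S \<le> flow m v r J' S' + energy 1 P1 P2 J' S'"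
begin

lemma optF:
  assumes a: "a \<in> {1..m}" and ra: "r a \<le> \<rho>" and rs: "\<rho> \<le> s" and sC: "s < C a"
  shows "work J S a s - work J S a \<rho> + cm {u. J u = None} s - cm {u. J u = None} \<rho> < v a - work J S a \<rho>"
proof (rule ccontr)
  let ?H = "\<lambda>s. work J S a s - work J S a \<rho> + cm {u. J u = None} s - cm {u. J u = None} \<rho>"
  assume "\<not> ?H s < v a - work J S a \<rho>"
  then have Hs: "v a - work J S a \<rho> \<le> ?H s" by simp
  have Is: "{u. J u = None} \<in> sets lborel"
  proof -
    have "{u. J u = None} = UNIV - {u. J u \<noteq> None}" by auto
    then show ?thesis using Jsets_None[OF Jm] by simp
  qed
  have Hc: "continuous_on UNIV ?H"
    by (intro continuous_intros wcont cm_cont Is)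
  have R0: "?H \<rho> < v a - work J S a \<rho>" using Cprops(3)[OF a, of \<rho>] rs sC by simp
  obtain \<theta> where th: "\<rho> < \<theta>" "\<theta> \<le> s" "?H \<theta> = v a - work J S a \<rho>" "\<forall>x. \<rho> \<le> x \<longrightarrow> x < \<theta> \<longrightarrow> ?H x < v a - work J S a \<rho>"
    using first_hit[OF Hc R0 rs Hs] by blast
  interpret F: modF m v r s2 J S a \<rho> \<theta>
    by unfold_locales (use a ra th sC in auto)
  have "flow m v r J S + energy 1 P1 P2 J S \<le> flow m v r F.J' F.S' + energy 1 P1 P2 F.J' F.S'"
    by (rule opt[OF F.feas'])
  then show False using F.improve[OF P] by simp
qed

lemma optE:
  assumes ab: "a \<in> {1..m}" "b \<in> {1..m}" "a \<noteq> b" and rr: "r a \<le> \<rho>" "r b \<le> \<rho>"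
    and rs: "\<rho> \<le> s" and sC: "s < C a" "s < C b"
  shows "work J S a s - work J S a \<rho> + work J S b s - work J S b \<rho> < v a - work J S a \<rho>"
proof (rule ccontr)
  let ?G = "\<lambda>s. work J S a s - work J S a \<rho> + work J S b s - work J S b \<rho>"
  assume "\<not> ?G s < v a - work J S a \<rho>"
  then have Gs: "v a - work J S a \<rho> \<le> ?G s" by simp
  have Gc: "continuous_on UNIV ?G"
    by (intro continuous_intros wcont)
  have R0: "?G \<rho> < v a - work J S a \<rho>" using Cprops(3)[OF ab(1), of \<rho>] rs sC by simp
  obtain \<theta> where th: "\<rho> < \<theta>" "\<theta> \<le> s" "?G \<theta> = v a - work J S a \<rho>" "\<forall>x. \<rho> \<le> x \<longrightarrow> x < \<theta> \<longrightarrow> ?G x < v a - work J S a \<rho>"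
    using first_hit[OF Gc R0 rs Gs] by blast
  interpret E: modE m v r s2 J S a b \<rho> \<theta>
    by unfold_locales (use ab rr th sC in auto)
  have "flow m v r J S + energy 1 P1 P2 J S \<le> flow m v r E.J' S + energy 1 P1 P2 E.J' S"
    by (rule opt[OF E.feas'])
  then show False using E.improve[of P1 P2] by simp
qed

lemma optA:
  assumes j: "j \<in> {1..m}" and tau: "r j \<le> \<tau>" "0 \<le> \<tau>" "\<tau> < C j" and sig: "C j \<le> \<sigma>"
    and apos: "0 < a" and idle: "\<And>t. \<sigma> \<le> t \<Longrightarrow> t < \<sigma> + (s2 - 1) * a \<Longrightarrow> J t = None"
    and As: "A \<in> sets lborel" and Asub: "A \<subseteq> B2 j \<inter> {..<\<tau>}" and Ameas: "measure lborel A = a"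
  shows "P2 \<le> (s2 - 1) * card {k \<in> {1..m}. \<tau> < C k \<and> C k \<le> \<sigma>} + P1 * s2"
proof -
  interpret M: modA m v r s2 J S j \<tau> \<sigma> a A
    by unfold_locales (use assms in auto)
  have "flow m v r J S + energy 1 P1 P2 J S \<le> flow m v r M.J' M.S' + energy 1 P1 P2 M.J' M.S'"
    by (rule opt[OF M.feas'])
  then have "0 \<le> M.d * card {k \<in> {1..m}. \<tau> < C k \<and> C k \<le> \<sigma>} + P1 * (a + M.d) - P2 * a"
    using M.flow' M.energy'[of P1 P2] by simp
  then have "0 \<le> a * ((s2 - 1) * card {k \<in> {1..m}. \<tau> < C k \<and> C k \<le> \<sigma>} + P1 * s2 - P2)"
    by (simp add: M.d_def algebra_simps)
  then show ?thesis using apos by (simp add: zero_le_mult_iff)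
qed

end


lemma cm_UN: "finite K \<Longrightarrow> (\<And>k. k \<in> K \<Longrightarrow> X k \<in> sets lborel) \<Longrightarrow> disjoint_family_on X K \<Longrightarrow>
  cm (\<Union>k\<in>K. X k) t = (\<Sum>k\<in>K. cm (X k) t)"
proof (induction K rule: finite_induct)
  case empty then show ?case by (simp add: cm_def)
next
  case (insert x F)
  have d: "X x \<inter> (\<Union>k\<in>F. X k) = {}" using insert.prems(2) insert.hyps(2)
    unfolding disjoint_family_on_def by fastforce
  have s: "(\<Union>k\<in>F. X k) \<in> sets lborel" using insert.prems(1) insert.hyps(1) by (intro sets.finite_UN) auto
  have "cm (\<Union>k\<in>insert x F. X k) t = cm (X x) t + cm (\<Union>k\<in>F. X k) t"
    using cm_Un[OF insert.prems(1)[of x] s d] by simp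
  moreover have "cm (\<Union>k\<in>F. X k) t = (\<Sum>k\<in>F. cm (X k) t)"
    using insert.IH insert.prems by (auto simp: disjoint_family_on_def)
  ultimately show ?case using insert.hyps by simp
qed

context fsched begin

lemma Idles: "{u. J u = None} \<in> sets lborel"
proof -
  have "{u. J u = None} = UNIV - {u. J u \<noteq> None}" by auto
  then show ?thesis using Jsets_None[OF Jm] by simp
qed

lemma decomp:
  assumes "0 \<le> \<rho>" "\<rho> \<le> t"
  shows "t - \<rho> \<le> (cm {u. J u = None} t - cm {u. J u = None} \<rho>) + (\<Sum>k\<in>{1..m}. work J S k t - work J S k \<rho>)"
proof -
  let ?I = "{u. J u = None}"
  have U: "UNIV = ?I \<union> (\<Union>k\<in>{1..m}. Bk k)"
  proof -
    { fix x
      have "x \<in> ?I \<union> (\<Union>k\<in>{1..m}. Bk k)"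
      proof (cases "J x")
        case None then show ?thesis by simp
      next
        case (Some k) then show ?thesis using Jprop[OF Some] by auto
      qed }
    then show ?thesis by blast
  qed
  have dj: "disjoint_family_on Bk {1..m}" by (auto simp: disjoint_family_on_def)
  have d2: "?I \<inter> (\<Union>k\<in>{1..m}. Bk k) = {}" by auto
  have Bb: "\<And>k. Bk k \<in> sets borel" using Bks by simp
  have Us: "(\<Union>k\<in>{1..m}. Bk k) \<in> sets lborel" using Bb by (intro sets.finite_UN) auto
  have cU: "cm UNIV x = cm ?I x + (\<Sum>k\<in>{1..m}. cm (Bk k) x)" for x
  proof -
    have "cm (\<Union>k\<in>{1..m}. Bk k) x = (\<Sum>k\<in>{1..m}. cm (Bk k) x)"
      by (rule cm_UN[OF _ _ dj]) (use Bb in auto)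
    then show ?thesis using cm_Un[OF Idles Us d2, of x] U by simp
  qed
  have cUx: "cm UNIV x = x" if "0 \<le> x" for x using that by (simp add: cm_def)
  have Bsplit: "cm (Bk k) x = cm (B1 k) x + cm (B2 k) x" for k x
  proof -
    have "Bk k = B1 k \<union> B2 k" by auto
    moreover have "B1 k \<inter> B2 k = {}" by auto
    ultimately show ?thesis using cm_Un[OF B1s B2s, of k k x] by simp
  qed
  have inc: "cm (Bk k) t - cm (Bk k) \<rho> \<le> work J S k t - work J S k \<rho>" for k
  proof -
    have "0 \<le> cm (B2 k) t - cm (B2 k) \<rho>" using cm_mono[OF B2s assms(2)] by simp
    then have "cm (B2 k) t - cm (B2 k) \<rho> \<le> s2 * (cm (B2 k) t - cm (B2 k) \<rho>)" using s2
      by (simp add: mult_le_cancel_right1)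
    then show ?thesis unfolding Bsplit wf by (simp add: algebra_simps)
  qed
  have "t - \<rho> = (cm ?I t - cm ?I \<rho>) + (\<Sum>k\<in>{1..m}. cm (Bk k) t - cm (Bk k) \<rho>)"
    using cU[of t] cU[of \<rho>] cUx[of t] cUx[of \<rho>] assms by (simp add: sum_subtractf)
  also have "\<dots> \<le> (cm ?I t - cm ?I \<rho>) + (\<Sum>k\<in>{1..m}. work J S k t - work J S k \<rho>)"
    using inc by (intro add_left_mono sum_mono) auto
  finally show ?thesis .
qed

lemma measB: "k \<in> {1..m} \<Longrightarrow> Cmax \<le> L \<Longrightarrow> measure lborel (B1 k) = cm (B1 k) L \<and> measure lborel (B2 k) = cm (B2 k) L
   \<and> measure lborel (Bk k) = cm (B1 k) L + cm (B2 k) L"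
proof -
  assume k: "k \<in> {1..m}" and L: "Cmax \<le> L"
  have sub: "Bk k \<subseteq> {0..L}" using busy_bound L by fastforce
  then have e1: "B1 k \<inter> {0..L} = B1 k" and e2: "B2 k \<inter> {0..L} = B2 k" and e3: "Bk k \<inter> {0..L} = Bk k" by auto
  have "Bk k = B1 k \<union> B2 k" "B1 k \<inter> B2 k = {}" by auto
  then have "cm (Bk k) L = cm (B1 k) L + cm (B2 k) L" using cm_Un[OF B1s B2s, of k k L] by simp
  then show ?thesis unfolding cm_def using e1 e2 e3 by simp
qed

end

lemma srpt_compl:
  assumes f: "feasible n v r 1 1 J1 S1" and i: "i \<in> {1..n}" and vi: "0 < v i"
  shows "r i + v i \<le> compl v J1 S1 i"
proof -
  have Jm: "J1 \<in> measurable lborel (count_space UNIV)" and Sm: "S1 \<in> borel_measurable lborel"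
    using f by (auto simp: feasible_def)
  have P: "\<And>t k. J1 t = Some k \<Longrightarrow> r k \<le> t \<and> S1 t = 1" using f by (auto simp: feasible_def)
  have w: "work J1 S1 i t = cm {u. J1 u = Some i \<and> S1 u = 1} t + 2 * cm {u. J1 u = Some i \<and> S1 u \<noteq> 1} t" for t
    by (rule work_formula[OF Jm Sm]) (use P in blast)
  have e2: "{u. J1 u = Some i \<and> S1 u \<noteq> 1} = {}" using P by auto
  have bnd: "v i \<le> work J1 S1 i t \<Longrightarrow> r i + v i \<le> t" for t
  proof -
    assume vt: "v i \<le> work J1 S1 i t"
    have "work J1 S1 i t = measure lborel ({u. J1 u = Some i \<and> S1 u = 1} \<inter> {0..t})"
      using w[of t] e2 by (simp add: cm_def)
    also have "\<dots> \<le> measure lborel {r i..t}"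
    proof (rule measure_mono_fmeasurable)
      show "{u. J1 u = Some i \<and> S1 u = 1} \<inter> {0..t} \<subseteq> {r i..t}" using P by auto
      show "{u. J1 u = Some i \<and> S1 u = 1} \<inter> {0..t} \<in> sets lborel" using JSsets(1)[OF Jm Sm] by simp
      show "{r i..t} \<in> fmeasurable lborel" by (rule Icc_fm)
    qed
    finally have "v i \<le> measure lborel {r i..t}" using vt by simp
    then show ?thesis using vi by (cases "r i \<le> t") auto
  qed
  obtain b where "v i \<le> work J1 S1 i b" using f i unfolding feasible_def by blast
  then have ne: "{t. v i \<le> work J1 S1 i t} \<noteq> {}" by auto
  show ?thesis unfolding compl_def by (rule cInf_greatest[OF ne]) (use bnd in auto)
qed


locale fe = optsched +
  fixes n :: nat and V T Y Cm :: real
  assumes m: "m = 2 * n + 1" and n1: "1 \<le> n"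
    and V: "V = (\<Sum>k\<in>{1..n}. v k)"
    and vn1: "v (n + 1) = Cm + s2 * V + Y"
    and vnew: "\<And>k. k \<in> {n + 2..2 * n + 1} \<Longrightarrow> v k = Y + 1"
    and rn1: "r (n + 1) = 0"
    and rnew: "\<And>k. k \<in> {n + 2..2 * n + 1} \<Longrightarrow> r k = T"
    and T: "T = Cm + (s2 + 1) * V"
    and rsmall: "\<And>i. i \<in> {1..n} \<Longrightarrow> r i + v i \<le> Cm"
    and P2: "P2 = (real n + 3/2) * (s2 - 1) + P1 * s2"
begin

lemma small_in: "i \<in> {1..n} \<Longrightarrow> i \<in> {1..m}" using m by auto
lemma n1_in: "n + 1 \<in> {1..m}" using m by auto
lemma new_in: "k \<in> {n + 2..2 * n + 1} \<Longrightarrow> k \<in> {1..m}" using m by auto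

lemma vi_le_V: "i \<in> {1..n} \<Longrightarrow> v i \<le> V"
proof -
  assume i: "i \<in> {1..n}"
  have nn: "\<And>x. x \<in> {1..n} \<Longrightarrow> 0 \<le> v x" using vpos small_in by (meson less_imp_le)
  show ?thesis unfolding V by (rule member_le_sum[OF i]) (use nn in auto)
qed

lemma Vpos: "0 < V"
proof -
  have "0 < v 1" using vpos[OF small_in[of 1]] n1 by simp
  then show ?thesis using vi_le_V[of 1] n1 by simp
qed

lemma n1_bound:
  assumes i: "i \<in> {1..n}" and t: "r i \<le> t" and tC: "t < C i"
  shows "work J S (n + 1) t - work J S (n + 1) (r i) \<le> v i"
proof -
  have ii: "i \<in> {1..m}" using small_in[OF i] .
  have ne: "i \<noteq> n + 1" using i by auto
  have r0: "r (n + 1) \<le> r i" using rn1 rnn[OF ii] by simp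
  have w0: "work J S i (r i) = 0" using wzero[OF ii] by simp
  let ?G = "\<lambda>s. work J S i s - work J S i (r i) + work J S (n + 1) s - work J S (n + 1) (r i)"
  have G: "?G s < v i" if "r i \<le> s" "s < C i" "s < C (n + 1)" for s
    using optE[OF ii n1_in ne order_refl r0 that] w0 by simp
  show ?thesis
  proof (cases "t < C (n + 1)")
    case True
    then show ?thesis using G[OF t tC True] wmono[OF t, of i] by simp
  next
    case False
    then have wt: "work J S (n + 1) t = v (n + 1)" using wafter[OF n1_in] by simp
    show ?thesis
    proof (cases "C (n + 1) \<le> r i")
      case True
      then show ?thesis using wt wafter[OF n1_in, of "r i"] vpos[OF ii] by simp
    next
      case False
      have "?G (C (n + 1)) \<le> v i"
      proof (rule left_limit_le[of ?G "r i"])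
        show "continuous_on UNIV ?G" by (intro continuous_intros wcont)
        show "r i < C (n + 1)" using False by simp
        fix s assume "r i \<le> s" "s < C (n + 1)"
        then show "?G s \<le> v i" using G[of s] \<open>\<not> t < C (n + 1)\<close> tC by simp
      qed
      moreover have "0 \<le> work J S i (C (n + 1)) - work J S i (r i)" using wmono[of "r i" "C (n + 1)" i] False by simp
      ultimately show ?thesis using wt Cprops(2)[OF n1_in] by simp
    qed
  qed
qed

lemma claimS: "i \<in> {1..n} \<Longrightarrow> C i < T"
proof (rule ccontr)
  assume i: "i \<in> {1..n}" and "\<not> C i < T"
  then have CT: "T \<le> C i" by simp
  have ii: "i \<in> {1..m}" using small_in[OF i] .
  let ?\<rho> = "r i"
  define t where "t = T - v i / 2"
  have vi: "0 < v i" "v i \<le> V" using vpos[OF ii] vi_le_V[OF i] by auto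
  have rC: "r i + v i \<le> Cm" using rsmall[OF i] .
  have big: "V + v i \<le> t - ?\<rho>"
  proof -
    have "V \<le> s2 * V" using s2 Vpos by simp
    then have "v i / 2 \<le> s2 * V" using vi by linarith
    then show ?thesis using rC vi unfolding t_def T by (simp add: algebra_simps)
  qed
  have r0: "0 \<le> ?\<rho>" using rnn[OF ii] .
  have rt: "?\<rho> \<le> t" using big Vpos vi by simp
  have tC: "t < C i" using CT vi unfolding t_def by simp
  note n1b = n1_bound[OF i rt tC]
  let ?inc = "\<lambda>k. work J S k t - work J S k ?\<rho>"
  let ?I = "{u. J u = None}"
  have dec: "t - ?\<rho> \<le> (cm ?I t - cm ?I ?\<rho>) + (\<Sum>k\<in>{1..m}. ?inc k)" by (rule decomp[OF r0 rt])
  have F: "?inc i + (cm ?I t - cm ?I ?\<rho>) < v i"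
    using optF[OF ii order_refl rt tC] wzero[OF ii order_refl] by simp
  define b where "b k = (if k \<le> n then v k else if k = n + 1 then v i else 0)" for k
  have bb: "?inc k \<le> b k" if k: "k \<in> {1..m} - {i}" for k
  proof -
    have km: "k \<in> {1..m}" using k by simp
    consider (s) "k \<le> n" | (n1) "k = n + 1" | (nw) "n + 2 \<le> k" by linarith
    then show ?thesis
    proof cases
      case s then show ?thesis using wle[OF km, of t] wnonneg[of k ?\<rho>] by (simp add: b_def)
    next
      case n1 then show ?thesis using n1b by (simp add: b_def)
    next
      case nw
      then have kn: "k \<in> {n + 2..2 * n + 1}" using km m by auto
      have "work J S k t = 0" by (rule wzero[OF km]) (use rnew[OF kn] vi in \<open>simp add: t_def\<close>)
      then show ?thesis using wnonneg[of k ?\<rho>] nw by (simp add: b_def)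
    qed
  qed
  have sumb: "(\<Sum>k\<in>{1..m}. b k) = V + v i"
  proof -
    have "(\<Sum>k\<in>{1..m}. b k) = (\<Sum>k\<in>{1..m}. (if k \<le> n then v k else 0)) + (\<Sum>k\<in>{1..m}. (if k = n + 1 then v i else 0))"
      by (subst sum.distrib[symmetric]) (rule sum.cong, auto simp: b_def)
    also have "(\<Sum>k\<in>{1..m}. (if k \<le> n then v k else 0)) = (\<Sum>k\<in>{k \<in> {1..m}. k \<le> n}. v k)"
      by (rule sum.inter_filter[symmetric]) simp
    also have "{k \<in> {1..m}. k \<le> n} = {1..n}" using m by auto
    also have "(\<Sum>k\<in>{1..m}. (if k = n + 1 then v i else 0)) = v i" using n1_in by simp
    finally show ?thesis using V by simp
  qed
  have "(\<Sum>k\<in>{1..m}. ?inc k) = ?inc i + (\<Sum>k\<in>{1..m} - {i}. ?inc k)"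
    using ii by (simp add: sum.remove)
  also have "(\<Sum>k\<in>{1..m} - {i}. ?inc k) \<le> (\<Sum>k\<in>{1..m} - {i}. b k)" using bb by (rule sum_mono)
  also have "(\<Sum>k\<in>{1..m} - {i}. b k) = V + v i - b i" using sumb ii by (simp add: sum_diff1)
  also have "b i = v i" using i by (simp add: b_def)
  finally have "(\<Sum>k\<in>{1..m}. ?inc k) \<le> ?inc i + V" by simp
  then show False using dec F big by simp
qed

end


context fe begin

lemma B2_zero:
  assumes jj: "j \<in> {n + 1..2 * n + 1}"
  shows "measure lborel (B2 j) = 0"
proof (rule ccontr)
  assume ne: "measure lborel (B2 j) \<noteq> 0"
  define \<mu> where "\<mu> = measure lborel (B2 j)"
  have j: "j \<in> {1..m}" using jj m by auto
  have mu: "0 < \<mu>" using ne measure_nonneg[of lborel "B2 j"] unfolding \<mu>_def by linarith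
  have B2sub: "B2 j \<subseteq> {r j..C j}"
  proof
    fix x assume "x \<in> B2 j"
    then have "x \<in> Bk j" by simp
    then show "x \<in> {r j..C j}" using Bk_C[OF j] Bk_r[of j] by force
  qed
  have B2fm: "B2 j \<in> fmeasurable lborel" by (rule fmI[OF B2s B2sub])
  have muC: "\<mu> \<le> C j - r j"
  proof -
    have "\<mu> \<le> measure lborel {r j..C j}" unfolding \<mu>_def
      by (rule measure_mono_fmeasurable[OF B2sub]) (use B2s Icc_fm in auto)
    then show ?thesis using rC[OF j] by simp
  qed
  define t0 where "t0 = C j - \<mu> / 2"
  have t0: "r j \<le> t0" "t0 < C j" using muC mu unfolding t0_def by auto
  have m0: "\<mu> / 2 \<le> measure lborel (B2 j \<inter> {..<t0})"
  proof -
    have s1: "B2 j \<inter> {..<t0} \<in> fmeasurable lborel" using B2fm by (rule fmeasurable_Int_fmeasurable) simp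
    have s2': "B2 j \<inter> {t0..} \<in> fmeasurable lborel" using B2fm by (rule fmeasurable_Int_fmeasurable) simp
    have "\<mu> = measure lborel ((B2 j \<inter> {..<t0}) \<union> (B2 j \<inter> {t0..}))" unfolding \<mu>_def
      by (rule arg_cong[where f="measure lborel"]) auto
    also have "\<dots> = measure lborel (B2 j \<inter> {..<t0}) + measure lborel (B2 j \<inter> {t0..})"
      by (rule meas_Un_fm[OF s1 s2']) auto
    also have "measure lborel (B2 j \<inter> {t0..}) \<le> measure lborel {t0..C j}"
      by (rule measure_mono_fmeasurable) (use B2sub Icc_fm s2' in auto)
    finally show ?thesis using t0 unfolding t0_def by simp
  qed
  define K0 where "K0 = {k \<in> {1..m}. C k < C j}"
  define \<tau> where "\<tau> = Max (insert t0 (C ` K0))"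
  have finK0: "finite (insert t0 (C ` K0))" unfolding K0_def by simp
  have tau_ge: "t0 \<le> \<tau>" unfolding \<tau>_def by (rule Max_ge[OF finK0]) simp
  have tau_lt: "\<tau> < C j" unfolding \<tau>_def using finK0 t0 by (subst Max_less_iff) (auto simp: K0_def)
  have tauK: "\<And>k. k \<in> {1..m} \<Longrightarrow> \<tau> < C k \<Longrightarrow> C j \<le> C k"
  proof (rule ccontr)
    fix k assume k: "k \<in> {1..m}" "\<tau> < C k" "\<not> C j \<le> C k"
    then have "C k \<le> \<tau>" unfolding \<tau>_def by (intro Max_ge[OF finK0]) (auto simp: K0_def)
    then show False using k by simp
  qed
  have rtau: "r j \<le> \<tau>" "0 \<le> \<tau>" using t0 tau_ge rnn[OF j] by auto
  have B2lt: "measure lborel (B2 j \<inter> {..<\<tau>}) = cm (B2 j) \<tau>"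
  proof -
    have "B2 j \<inter> {..<\<tau>} = B2 j \<inter> {0..<\<tau>}" using B2sub rnn[OF j] by auto
    then show ?thesis using meas_Ico_eq[OF B2s] by simp
  qed
  have mtau: "\<mu> / 2 \<le> cm (B2 j) \<tau>"
  proof -
    have "measure lborel (B2 j \<inter> {..<t0}) \<le> measure lborel (B2 j \<inter> {..<\<tau>})"
      by (rule measure_mono_fmeasurable) (use tau_ge B2s fmeasurable_Int_fmeasurable[OF B2fm, of "{..<\<tau>}"] in auto)
    then show ?thesis using m0 B2lt by simp
  qed
  obtain \<sigma> g where sg: "C j \<le> \<sigma>" "0 < g" "\<And>t. \<sigma> \<le> t \<Longrightarrow> t < \<sigma> + g \<Longrightarrow> J t = None"
      "card {k \<in> {1..m}. \<tau> < C k \<and> C k \<le> \<sigma>} \<le> n + 1"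
  proof (cases "j = n + 1 \<and> C (n + 1) < T")
    case True
    define X where "X = Max (C ` {1..n + 1})"
    have Xge: "\<And>k. k \<in> {1..n+1} \<Longrightarrow> C k \<le> X" unfolding X_def by (rule Max_ge) auto
    have XT: "X < T" unfolding X_def using claimS True by (subst Max_less_iff) (auto simp: le_Suc_eq)
    have idle: "J t = None" if "X \<le> t" "t < X + (T - X)" for t
    proof (rule ccontr)
      assume "J t \<noteq> None"
      then obtain k where k: "J t = Some k" by auto
      have km: "k \<in> {1..m}" using Jprop[OF k] by simp
      have tCk: "t < C k" using Bk_C[OF km] k by auto
      show False
      proof (cases "k \<le> n + 1")
        case True then show ?thesis using Xge[of k] km tCk that by auto
      next
        case False
        then have "k \<in> {n + 2..2 * n + 1}" using km m by auto
        then show ?thesis using rnew Jprop[OF k] that by force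
      qed
    qed
    have card: "card {k \<in> {1..m}. \<tau> < C k \<and> C k \<le> X} \<le> n + 1"
    proof -
      have "{k \<in> {1..m}. \<tau> < C k \<and> C k \<le> X} \<subseteq> {1..n+1}"
      proof
        fix k assume k: "k \<in> {k \<in> {1..m}. \<tau> < C k \<and> C k \<le> X}"
        show "k \<in> {1..n+1}"
        proof (rule ccontr)
          assume "k \<notin> {1..n+1}"
          then have kn: "k \<in> {n + 2..2 * n + 1}" using k m by auto
          have "T < C k" using rC[OF new_in[OF kn]] rnew[OF kn] by simp
          then show False using k XT by simp
        qed
      qed
      then show ?thesis by (metis card_atLeastAtMost card_mono diff_Suc_1 finite_atLeastAtMost)
    qed
    show ?thesis by (rule that[of X "T - X"]) (use Xge[of "n+1"] True XT idle card in auto)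
  next
    case False
    have CjT: "T \<le> C j"
    proof (cases "j = n + 1")
      case True then show ?thesis using False by simp
    next
      case False
      then have "j \<in> {n + 2..2 * n + 1}" using jj by auto
      then show ?thesis using rC[OF j] rnew by force
    qed
    have idle: "J t = None" if "Cmax + 1 \<le> t" for t
      using busy_bound[of t] that by force
    have card: "card {k \<in> {1..m}. \<tau> < C k \<and> C k \<le> Cmax + 1} \<le> n + 1"
    proof -
      have "{k \<in> {1..m}. \<tau> < C k \<and> C k \<le> Cmax + 1} \<subseteq> {n+1..2*n+1}"
      proof
        fix k assume k: "k \<in> {k \<in> {1..m}. \<tau> < C k \<and> C k \<le> Cmax + 1}"
        show "k \<in> {n+1..2*n+1}"
        proof (rule ccontr)
          assume "k \<notin> {n+1..2*n+1}"
          then have kn: "k \<in> {1..n}" using k m by auto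
          have "C k < T" by (rule claimS[OF kn])
          then show False using k tauK[of k] CjT by auto
        qed
      qed
      then have "card {k \<in> {1..m}. \<tau> < C k \<and> C k \<le> Cmax + 1} \<le> card {n+1..2*n+1}" by (intro card_mono) auto
      then show ?thesis by simp
    qed
    show ?thesis by (rule that[of "Cmax + 1" 1]) (use C_le_Cmax[OF j] idle card in auto)
  qed
  define a where "a = min (cm (B2 j) \<tau>) (g / (s2 - 1))"
  have apos: "0 < a" using mtau mu sg(2) s2 unfolding a_def by auto
  have a_le: "a \<le> cm (B2 j) \<tau>" "(s2 - 1) * a \<le> g" using s2 unfolding a_def by (auto simp: field_simps min_def)
  obtain x where x: "0 \<le> x" "x \<le> \<tau>" "cm (B2 j) x = a"
    using IVT'[of "cm (B2 j)" 0 a \<tau>] cm_zero[OF B2s] apos a_le rtau cm_cont[OF B2s] by force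
  define A where "A = B2 j \<inter> {..<x}"
  have As: "A \<in> sets lborel" using B2s unfolding A_def by simp
  have Asub: "A \<subseteq> B2 j \<inter> {..<\<tau>}" using x unfolding A_def by auto
  have Ameas: "measure lborel A = a"
  proof -
    have "A = B2 j \<inter> {0..<x}" using B2sub rnn[OF j] unfolding A_def by auto
    then show ?thesis using meas_Ico_eq[OF B2s, of j x] x by simp
  qed
  have idle2: "\<And>t. \<sigma> \<le> t \<Longrightarrow> t < \<sigma> + (s2 - 1) * a \<Longrightarrow> J t = None"
    using sg(3) a_le(2) by force
  have "P2 \<le> (s2 - 1) * card {k \<in> {1..m}. \<tau> < C k \<and> C k \<le> \<sigma>} + P1 * s2"
    by (rule optA[OF j rtau(1) rtau(2) tau_lt sg(1) apos idle2 As Asub Ameas])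
  then have "(real n + 3/2) * (s2 - 1) \<le> (s2 - 1) * card {k \<in> {1..m}. \<tau> < C k \<and> C k \<le> \<sigma>}"
    using P2 by simp
  then have "real n + 3/2 \<le> card {k \<in> {1..m}. \<tau> < C k \<and> C k \<le> \<sigma>}" using s2
    by (simp add: mult.commute)
  then show False using sg(4) by linarith
qed

lemma avg1:
  assumes jj: "j \<in> {n + 1..2 * n + 1}"
  shows "avg_speed v J j = 1"
proof -
  have j: "j \<in> {1..m}" using jj m by auto
  obtain L where L: "Cmax \<le> L" "C j \<le> L" using C_le_Cmax[OF j] by auto
  have mb: "measure lborel (B1 j) = cm (B1 j) L" "measure lborel (B2 j) = cm (B2 j) L"
    "measure lborel (Bk j) = cm (B1 j) L + cm (B2 j) L" using measB[OF j L(1)] by auto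
  have "v j = cm (B1 j) L + s2 * cm (B2 j) L" using wafter[OF j L(2)] wf by simp
  then have vj: "v j = measure lborel (Bk j)" using mb B2_zero[OF jj] by simp
  show ?thesis unfolding avg_speed_def proc_time_def using vj vpos[OF j] by simp
qed

end


theorem mainTheorem15:
  fixes n :: nat and v r :: "nat \<Rightarrow> real" and s2 P1 P2 B :: real
    and J1 J :: "real \<Rightarrow> nat option" and S1 S :: "real \<Rightarrow> real"
  assumes "1 < s2" and "0 < P1" and "P1 < P2"
    and "\<forall>j\<in>{1..n}. 0 < v j" and "\<forall>j\<in>{1..n}. 0 \<le> r j" and "\<exists>j\<in>{1..n}. r j = 0"
    and "P1 * (\<Sum>j\<in>{1..n}. v j) < B" and "B < P2 * (\<Sum>j\<in>{1..n}. v j) / s2"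
    and "is_SRPT n v r 1 J1 S1"
    and "optimal_FE (2 * n + 1)
           (FE_vol n v s2 P1 P2 B (makespan n v J1 S1))
           (FE_rel n v r s2 (makespan n v J1 S1))
           1 s2 P1 (FE_P2 n s2 P1) J S"
  shows "\<forall>j\<in>{n + 1..2 * n + 1}.
           avg_speed (FE_vol n v s2 P1 P2 B (makespan n v J1 S1)) J j = 1"
proof -
  note s2 = assms(1) and P1 = assms(2) and vp = assms(4) and rp = assms(5)
  define V where "V = (\<Sum>j\<in>{1..n}. v j)"
  define Cm where "Cm = makespan n v J1 S1"
  define Y where "Y = Yval n v s2 P1 P2 B"
  define vol where "vol = FE_vol n v s2 P1 P2 B Cm"
  define rel where "rel = FE_rel n v r s2 Cm"
  define T where "T = Cm + (s2 + 1) * V"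
  obtain j0 where j0: "j0 \<in> {1..n}" using assms(6) by auto
  have n1: "1 \<le> n" using j0 by simp
  have Vpos: "0 < V" unfolding V_def using vp j0 n1
    by (intro sum_pos) auto
  have B1: "P1 * V < B" and B2: "B < P2 * V / s2" using assms(7,8) unfolding V_def by auto
  have b1: "P1 * V * s2 < B * s2" using B1 s2 by simp
  have b2: "B * s2 < P2 * V" using B2 s2 by (simp add: field_simps)
  have "P1 * V * s2 < P2 * V" using b1 b2 by linarith
  then have P12: "P1 * s2 < P2" using Vpos by (simp add: mult.commute mult.left_commute)
  have D1: "0 < (P2 * 1 - P1 * s2) / (s2 - 1)" using P12 s2 by simp
  have Ypos: "0 < Y"
  proof -
    have "0 < (B - P1 * V) / ((P2 * 1 - P1 * s2) / (s2 - 1))" by (rule divide_pos_pos) (use B1 D1 in auto)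
    then show ?thesis unfolding Y_def Yval_def Let_def V_def by simp
  qed
  have feas1: "feasible n v r 1 1 J1 S1" using assms(9) by (simp add: is_SRPT_def)
  have rsmall: "r i + v i \<le> Cm" if i: "i \<in> {1..n}" for i
  proof -
    have "r i + v i \<le> compl v J1 S1 i" by (rule srpt_compl[OF feas1 i]) (use vp i in auto)
    also have "\<dots> \<le> Cm" unfolding Cm_def makespan_def by (rule Max_ge) (use i in auto)
    finally show ?thesis .
  qed
  have Cm0: "0 < Cm" using rsmall[OF j0] vp rp j0 by force
  have volsmall: "vol k = v k" if "k \<le> n" for k using that by (simp add: vol_def FE_vol_def Let_def)
  have voln1: "vol (n + 1) = Cm + s2 * V + Y"
    by (simp add: vol_def FE_vol_def Let_def V_def Y_def algebra_simps)
  have volnew: "vol k = Y + 1" if "k \<in> {n + 2..2 * n + 1}" for k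
    using that by (simp add: vol_def FE_vol_def Let_def Y_def)
  have relsmall: "rel k = r k" if "k \<le> n" for k using that by (simp add: rel_def FE_rel_def Let_def)
  have reln1: "rel (n + 1) = 0" by (simp add: rel_def FE_rel_def)
  have relnew: "rel k = T" if "k \<in> {n + 2..2 * n + 1}" for k
    using that by (simp add: rel_def FE_rel_def Let_def T_def V_def)
  have opt: "optimal_FE (2 * n + 1) vol rel 1 s2 P1 (FE_P2 n s2 P1) J S"
    using assms(10) unfolding vol_def rel_def Cm_def .
  have vposall: "0 < vol k" if "k \<in> {1..2 * n + 1}" for k
  proof -
    have "k \<le> n \<or> k = n + 1 \<or> k \<in> {n + 2..2 * n + 1}" using that by auto
    then consider (s) "k \<le> n" | (a) "k = n + 1" | (b) "k \<in> {n + 2..2 * n + 1}" by blast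
    then show ?thesis
    proof cases
      case s then show ?thesis using volsmall vp that by auto
    next
      case a
      have "0 < s2 * V" using s2 Vpos by simp
      then show ?thesis using a voln1 Cm0 Ypos by simp
    next
      case b then show ?thesis using volnew Ypos by simp
    qed
  qed
  have rposall: "0 \<le> rel k" if "k \<in> {1..2 * n + 1}" for k
  proof -
    have "k \<le> n \<or> k = n + 1 \<or> k \<in> {n + 2..2 * n + 1}" using that by auto
    then consider (s) "k \<le> n" | (a) "k = n + 1" | (b) "k \<in> {n + 2..2 * n + 1}" by blast
    then show ?thesis
    proof cases
      case s then show ?thesis using relsmall rp that by auto
    next
      case a then show ?thesis using reln1 by simp
    next
      case b then show ?thesis using relnew Cm0 Vpos s2 unfolding T_def by (simp add: add_nonneg_nonneg)
    qed
  qed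
  have feas: "feasible (2 * n + 1) vol rel 1 s2 J S" using opt by (simp add: optimal_FE_def)
  have PP: "P1 * s2 \<le> FE_P2 n s2 P1" using s2 by (simp add: FE_P2_def)
  interpret F: fe "2 * n + 1" vol rel s2 J S P1 "FE_P2 n s2 P1" n V T Y Cm
  proof (unfold_locales)
    show "feasible (2 * n + 1) vol rel 1 s2 J S" by (rule feas)
    show "1 < s2" by (rule s2)
    show "\<And>k. k \<in> {1..2 * n + 1} \<Longrightarrow> 0 < vol k" by (rule vposall)
    show "\<And>k. k \<in> {1..2 * n + 1} \<Longrightarrow> 0 \<le> rel k" by (rule rposall)
    show "P1 * s2 \<le> FE_P2 n s2 P1" by (rule PP)
    show "\<And>J' S'. feasible (2 * n + 1) vol rel 1 s2 J' S' \<Longrightarrow>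
       flow (2 * n + 1) vol rel J S + energy 1 P1 (FE_P2 n s2 P1) J S \<le> flow (2 * n + 1) vol rel J' S' + energy 1 P1 (FE_P2 n s2 P1) J' S'"
      using opt by (simp add: optimal_FE_def)
    show "2 * n + 1 = 2 * n + 1" ..
    show "1 \<le> n" by (rule n1)
    show "V = (\<Sum>k\<in>{1..n}. vol k)" unfolding V_def by (rule sum.cong) (auto simp: volsmall)
    show "vol (n + 1) = Cm + s2 * V + Y" by (rule voln1)
    show "\<And>k. k \<in> {n + 2..2 * n + 1} \<Longrightarrow> vol k = Y + 1" by (rule volnew)
    show "rel (n + 1) = 0" by (rule reln1)
    show "\<And>k. k \<in> {n + 2..2 * n + 1} \<Longrightarrow> rel k = T" by (rule relnew)
    show "T = Cm + (s2 + 1) * V" by (rule T_def)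
    show "\<And>i. i \<in> {1..n} \<Longrightarrow> rel i + vol i \<le> Cm" using rsmall volsmall relsmall by auto
    show "FE_P2 n s2 P1 = (real n + 3 / 2) * (s2 - 1) + P1 * s2" by (simp add: FE_P2_def)
  qed
  show ?thesis using F.avg1 unfolding vol_def Cm_def by blast
qed


end
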